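(* Let $A$ be a bounded linear operator on a complex Hilbert space $\mathcal H\neq\{0\}$. Then \[ W_0(A)\cap\partial W(A) = \bigl(\sigma(A)\cap\mathcal C_A\bigr)\cup\mathcal L_A, \] where $\mathcal C_A=\{z\in\mathbb C: |z|=\|A\|\}$ and $\mathcal L_A$ is the union of all chords of the circle $\mathcal C_A$ (closed line segments whose two endpoints lie on $\mathcal C_A$) that are contained in $\partial W(A)$.
   Context: The numerical range of $A$ is $W(A)=\{\langle Ax,x\rangle : x\in\mathcal H,\ \|x\|=1\}$, and $\partial W(A)$ denotes its boundary in $\mathbb C$. The maximal numerical range $W_0(A)$ is the set of all $\lambda\in\mathbb C$ for which there exist unit vectors $x_n\in\mathcal H$ with $\|Ax_n\|\to\|A\|$ and $\langle Ax_n,x_n\rangle\to\lambda$. $\sigma(A)$ denotes the spectrum of $A$. *)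

theory Defs
  imports "HOL-Analysis.Analysis"
begin

text \<open>HOL-Analysis has no complex inner product spaces, so we introduce them as a type class:
  a real normed vector space with a complex scalar multiplication extending the real one and a
  complex inner product, linear in the first argument and conjugate symmetric, inducing the norm.\<close>

class complex_inner = real_normed_vector +
  fixes scaleC :: "complex \<Rightarrow> 'a \<Rightarrow> 'a" (infixr "*\<^sub>C" 75)
    and cinner :: "'a \<Rightarrow> 'a \<Rightarrow> complex"
  assumes scaleC_add_right: "a *\<^sub>C (x + y) = a *\<^sub>C x + a *\<^sub>C y"
    and scaleC_add_left: "(a + b) *\<^sub>C x = a *\<^sub>C x + b *\<^sub>C x"
    and scaleC_scaleC: "a *\<^sub>C (b *\<^sub>C x) = (a * b) *\<^sub>C x"
    and scaleC_one: "1 *\<^sub>C x = x"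
    and scaleC_of_real: "complex_of_real r *\<^sub>C x = r *\<^sub>R x"
    and cinner_add_left: "cinner (x + y) z = cinner x z + cinner y z"
    and cinner_scaleC_left: "cinner (a *\<^sub>C x) y = a * cinner x y"
    and cinner_commute: "cinner x y = cnj (cinner y x)"
    and cinner_self_nonneg: "0 \<le> Re (cinner x x)"
    and norm_eq_sqrt_cinner: "norm x = sqrt (Re (cinner x x))"

class chilbert_space = complex_inner + complete_space


text \<open>Non-vacuity: the complex numbers form a complex Hilbert space.\<close>
instantiation complex :: chilbert_space
begin
definition scaleC_complex :: "complex \<Rightarrow> complex \<Rightarrow> complex" where "scaleC_complex a x = a * x"
definition cinner_complex :: "complex \<Rightarrow> complex \<Rightarrow> complex" where "cinner_complex x y = x * cnj y"
instance
proof
  fix x :: complex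
  show "norm x = sqrt (Re (cinner x x))"
    by (simp add: cinner_complex_def complex_mult_cnj cmod_def power2_eq_square)
qed (auto simp: scaleC_complex_def cinner_complex_def algebra_simps scaleR_conv_of_real)
end

definition cbounded_linear :: "('a::complex_inner \<Rightarrow> 'a) \<Rightarrow> bool" where
  "cbounded_linear A \<longleftrightarrow>
     (\<forall>x y. A (x + y) = A x + A y) \<and>
     (\<forall>c x. A (c *\<^sub>C x) = c *\<^sub>C A x) \<and>
     (\<exists>K. \<forall>x. norm (A x) \<le> K * norm x)"

text \<open>The operator norm is HOL-Analysis' onorm.\<close>

definition num_range :: "('a::complex_inner \<Rightarrow> 'a) \<Rightarrow> complex set" where
  "num_range A = {cinner (A x) x | x. norm x = 1}"

definition max_num_range :: "('a::complex_inner \<Rightarrow> 'a) \<Rightarrow> complex set" where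
  "max_num_range A = {l. \<exists>x :: nat \<Rightarrow> 'a. (\<forall>n. norm (x n) = 1) \<and>
      (\<lambda>n. norm (A (x n))) \<longlonglongrightarrow> onorm A \<and>
      (\<lambda>n. cinner (A (x n)) (x n)) \<longlonglongrightarrow> l}"

definition op_spectrum :: "('a::complex_inner \<Rightarrow> 'a) \<Rightarrow> complex set" where
  "op_spectrum A = {l. \<not> (\<exists>B. cbounded_linear B \<and>
      (\<forall>x. B (A x - l *\<^sub>C x) = x) \<and> (\<forall>y. A (B y) - l *\<^sub>C B y = y))}"

definition circ_A :: "('a::complex_inner \<Rightarrow> 'a) \<Rightarrow> complex set" where
  "circ_A A = {z. norm z = onorm A}"

definition chords_A :: "('a::complex_inner \<Rightarrow> 'a) \<Rightarrow> complex set" where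
  "chords_A A = \<Union> {closed_segment a b | a b. a \<noteq> b \<and> a \<in> circ_A A \<and> b \<in> circ_A A \<and>
      closed_segment a b \<subseteq> frontier (num_range A)}"

end

theory Submission
  imports Defs
begin
lemma scaleC_zero_left[simp]: "(0::complex) *\<^sub>C (x::'a::complex_inner) = 0"
  using scaleC_of_real[of 0 x] by simp

lemma scaleC_real: "(complex_of_real r) *\<^sub>C (x::'a::complex_inner) = r *\<^sub>R x"
  by (rule scaleC_of_real)

lemma scaleC_minus_one: "(-1::complex) *\<^sub>C (x::'a::complex_inner) = - x"
  using scaleC_of_real[of "-1" x] by simp

lemma scaleC_zero_right[simp]: "c *\<^sub>C (0::'a::complex_inner) = 0"
  using scaleC_add_right[of c 0 0] by simp

lemma scaleC_minus_right: "c *\<^sub>C (- x::'a::complex_inner) = - (c *\<^sub>C x)"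
  using scaleC_add_right[of c x "-x"] by (simp add: eq_neg_iff_add_eq_0 add.commute)

lemma scaleC_diff_right: "c *\<^sub>C (x - y::'a::complex_inner) = c *\<^sub>C x - c *\<^sub>C y"
  using scaleC_add_right[of c x "-y"] by (simp add: scaleC_minus_right)

lemma scaleC_minus_left: "(- c) *\<^sub>C (x::'a::complex_inner) = - (c *\<^sub>C x)"
  using scaleC_scaleC[of "-1" c x] scaleC_minus_one[of "c *\<^sub>C x"] by simp

lemma scaleC_diff_left: "(a - b) *\<^sub>C (x::'a::complex_inner) = a *\<^sub>C x - b *\<^sub>C x"
  using scaleC_add_left[of a "-b" x] by (simp add: scaleC_minus_left)

lemma cinner_zero_left[simp]: "cinner 0 (y::'a::complex_inner) = 0"
  using cinner_add_left[of 0 0 y] by simp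

lemma cinner_zero_right[simp]: "cinner (y::'a::complex_inner) 0 = 0"
  using cinner_commute[of y 0] by simp

lemma cinner_add_right: "cinner (x::'a::complex_inner) (y + z) = cinner x y + cinner x z"
  using cinner_commute[of x "y+z"] cinner_commute[of y x] cinner_commute[of z x]
  by (simp add: cinner_add_left)

lemma cinner_scaleC_right: "cinner (x::'a::complex_inner) (a *\<^sub>C y) = cnj a * cinner x y"
  using cinner_commute[of x "a *\<^sub>C y"] cinner_commute[of y x]
  by (simp add: cinner_scaleC_left)

lemma cinner_minus_left: "cinner (- x::'a::complex_inner) y = - cinner x y"
  using cinner_scaleC_left[of "-1" x y] by (simp add: scaleC_minus_one)

lemma cinner_minus_right: "cinner (x::'a::complex_inner) (- y) = - cinner x y"
  using cinner_scaleC_right[of x "-1" y] by (simp add: scaleC_minus_one)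

lemma cinner_diff_left: "cinner (x - y::'a::complex_inner) z = cinner x z - cinner y z"
  using cinner_add_left[of x "-y" z] by (simp add: cinner_minus_left)

lemma cinner_diff_right: "cinner (x::'a::complex_inner) (y - z) = cinner x y - cinner x z"
  using cinner_add_right[of x y "-z"] by (simp add: cinner_minus_right)

lemma cinner_scaleR_left: "cinner (r *\<^sub>R x::'a::complex_inner) y = complex_of_real r * cinner x y"
  by (metis cinner_scaleC_left scaleC_of_real)

lemma cinner_scaleR_right: "cinner (x::'a::complex_inner) (r *\<^sub>R y) = complex_of_real r * cinner x y"
  by (metis cinner_scaleC_right scaleC_of_real complex_cnj_complex_of_real)

lemma cinner_self_real: "Im (cinner (x::'a::complex_inner) x) = 0"
  using cinner_commute[of x x] by (metis complex_cnj_complex_of_real complex_eq_iff complex_cnj_cnj Reals_cnj_iff complex_is_Real_iff)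

lemma cinner_self: "cinner (x::'a::complex_inner) x = complex_of_real ((norm x)^2)"
proof -
  have "Re (cinner x x) = (norm x)^2"
    using norm_eq_sqrt_cinner[of x] cinner_self_nonneg[of x] by simp
  then show ?thesis using cinner_self_real[of x] by (simp add: complex_eq_iff)
qed

lemma Re_cinner_self: "Re (cinner (x::'a::complex_inner) x) = (norm x)^2"
  by (simp add: cinner_self)

lemma real_quad_nonneg:
  fixes P S q :: real
  assumes "\<And>t. 0 \<le> P - 2 * t * q + t^2 * q * S" "0 \<le> q" "0 \<le> P" "0 \<le> S"
  shows "q \<le> P * S"
proof (cases "S = 0")
  case True
  show ?thesis
  proof (rule ccontr)
    assume "\<not> ?thesis"
    then have "q > 0" using True by simp
    have "0 \<le> P - 2 * ((P+1)/(2*q)) * q" using assms(1)[of "(P+1)/(2*q)"] True by simp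
    also have "\<dots> = -1" using \<open>q>0\<close> by (simp add: field_simps)
    finally show False by simp
  qed
next
  case False
  then have "S > 0" using assms by simp
  have "0 \<le> P - 2 * (1/S) * q + (1/S)^2 * q * S" by (rule assms(1))
  also have "\<dots> = (P*S - q)/S" using \<open>S>0\<close> by (simp add: field_simps power2_eq_square)
  finally show ?thesis using \<open>S>0\<close> by (simp add: divide_nonneg_pos zero_le_divide_iff)
qed

lemma form_CS:
  fixes B :: "'a::complex_inner \<Rightarrow> 'a \<Rightarrow> complex"
  assumes add: "\<And>x y z. B (x + y) z = B x z + B y z"
    and sc: "\<And>c x y. B (c *\<^sub>C x) y = c * B x y"
    and herm: "\<And>x y. B x y = cnj (B y x)"
    and pos: "\<And>x. 0 \<le> Re (B x x)"
  shows "(cmod (B x y))^2 \<le> Re (B x x) * Re (B y y)"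
proof -
  have addr: "B x (y + z) = B x y + B x z" for x y z
    using herm[of x "y+z"] herm[of y x] herm[of z x] add by simp
  have scr: "B x (c *\<^sub>C y) = cnj c * B x y" for x y c
    using herm[of x "c *\<^sub>C y"] herm[of y x] sc by simp
  have real: "B x x = complex_of_real (Re (B x x))" for x
    using herm[of x x] by (metis Reals_cnj_iff complex_is_Real_iff complex_eq_iff Re_complex_of_real Im_complex_of_real)
  let ?b = "B x y"
  have "0 \<le> Re (B x x) - 2 * t * (cmod ?b)^2 + t^2 * (cmod ?b)^2 * Re (B y y)" for t :: real
  proof -
    let ?c = "- complex_of_real t * ?b"
    have "B (x + ?c *\<^sub>C y) (x + ?c *\<^sub>C y) = B x x + cnj ?c * B x y + ?c * B y x + ?c * cnj ?c * B y y"
      by (simp only: add addr sc scr) (simp add: algebra_simps)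
    also have "B y x = cnj ?b" by (rule herm)
    finally have e: "B (x + ?c *\<^sub>C y) (x + ?c *\<^sub>C y) = B x x + cnj ?c * ?b + ?c * cnj ?b + ?c * cnj ?c * B y y" .
    have "Re (B (x + ?c *\<^sub>C y) (x + ?c *\<^sub>C y)) = Re (B x x) - 2 * t * (cmod ?b)^2 + t^2 * (cmod ?b)^2 * Re (B y y)"
      unfolding e
      apply (subst real[of y])
      apply (simp only: cmod_power2)
      apply (simp add: power2_eq_square algebra_simps)
      done
    then show ?thesis using pos by metis
  qed
  then show ?thesis
    by (rule real_quad_nonneg) (use pos in auto)
qed

lemma cinner_CS: "cmod (cinner (x::'a::complex_inner) y) \<le> norm x * norm y"
proof -
  have "(cmod (cinner x y))^2 \<le> Re (cinner x x) * Re (cinner y y)"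
    by (rule form_CS) (auto intro: cinner_add_left cinner_scaleC_left cinner_commute cinner_self_nonneg)
  also have "\<dots> = (norm x * norm y)^2" by (simp add: Re_cinner_self power_mult_distrib)
  finally show ?thesis by (meson abs_le_square_iff abs_norm_cancel norm_ge_zero abs_of_nonneg mult_nonneg_nonneg power2_le_imp_le)
qed

lemma bounded_bilinear_cinner: "bounded_bilinear (cinner :: 'a::complex_inner \<Rightarrow> 'a \<Rightarrow> complex)"
  apply (rule bounded_bilinear.intro)
  apply (auto simp: cinner_add_left cinner_add_right cinner_scaleR_left cinner_scaleR_right scaleR_conv_of_real)
  apply (rule exI[of _ 1]) apply (simp add: cinner_CS)
  done

lemmas tendsto_cinner = bounded_bilinear.tendsto[OF bounded_bilinear_cinner]
lemmas continuous_on_cinner = bounded_bilinear.continuous_on[OF bounded_bilinear_cinner]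
lemmas continuous_cinner = bounded_bilinear.continuous[OF bounded_bilinear_cinner]

lemma norm_scaleC: "norm (c *\<^sub>C (x::'a::complex_inner)) = cmod c * norm x"
proof -
  have "cinner (c *\<^sub>C x) (c *\<^sub>C x) = (c * cnj c) * cinner x x"
    by (simp add: cinner_scaleC_left cinner_scaleC_right)
  also have "\<dots> = complex_of_real ((cmod c)^2 * (norm x)^2)"
    by (simp add: complex_norm_square[symmetric] cinner_self)
  finally have "(norm (c *\<^sub>C x))^2 = (cmod c * norm x)^2"
    using Re_cinner_self[of "c *\<^sub>C x"] by (simp add: power_mult_distrib)
  then show ?thesis by (simp add: power2_eq_iff_nonneg)
qed

lemma norm_diff_scaleC_sq:
  "(norm (u - a *\<^sub>C (x::'a::complex_inner)))^2 = (norm u)^2 - 2 * Re (cnj a * cinner u x) + (cmod a)^2 * (norm x)^2"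
proof -
  have "(norm (u - a *\<^sub>C x))^2 = Re (cinner (u - a *\<^sub>C x) (u - a *\<^sub>C x))" by (simp add: Re_cinner_self)
  also have "cinner (u - a *\<^sub>C x) (u - a *\<^sub>C x) = cinner u u - cnj a * cinner u x - a * cinner x u + a * cnj a * cinner x x"
    by (simp add: cinner_diff_left cinner_diff_right cinner_scaleC_left cinner_scaleC_right algebra_simps)
  also have "cinner x u = cnj (cinner u x)" by (rule cinner_commute)
  finally show ?thesis
    by (simp add: cinner_self complex_mult_cnj cmod_power2[symmetric])
qed

locale cbl =
  fixes A :: "'a::complex_inner \<Rightarrow> 'a"
  assumes cbl: "cbounded_linear A"
begin

lemma A_add: "A (x + y) = A x + A y" using cbl unfolding cbounded_linear_def by blast
lemma A_scaleC: "A (c *\<^sub>C x) = c *\<^sub>C A x" using cbl unfolding cbounded_linear_def by blast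
lemma A_scaleR: "A (r *\<^sub>R x) = r *\<^sub>R A x" using A_scaleC[of "complex_of_real r" x] by (simp add: scaleC_of_real)
lemma A_zero[simp]: "A 0 = 0" using A_scaleR[of 0 0] by simp
lemma A_minus: "A (- x) = - A x" using A_scaleR[of "-1" x] by simp
lemma A_diff: "A (x - y) = A x - A y" using A_add[of x "-y"] A_minus by simp

lemma bl: "bounded_linear A"
proof -
  obtain K where K: "\<And>x. norm (A x) \<le> K * norm x" using cbl unfolding cbounded_linear_def by blast
  show ?thesis
    by (unfold_locales) (auto simp: A_add A_scaleR intro!: exI[of _ K] simp: K mult.commute)
qed

abbreviation "R \<equiv> onorm A"

lemma R_nonneg: "0 \<le> R" by (rule onorm_pos_le[OF bl])
lemma norm_A: "norm (A x) \<le> R * norm x" by (rule onorm[OF bl])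

lemma norm_A_unit: "norm x = 1 \<Longrightarrow> norm (A x) \<le> R" using norm_A[of x] by simp

lemma cinner_A_le: "cmod (cinner (A x) x) \<le> R * (norm x)^2"
proof -
  have "cmod (cinner (A x) x) \<le> norm (A x) * norm x" by (rule cinner_CS)
  also have "\<dots> \<le> (R * norm x) * norm x" by (rule mult_right_mono[OF norm_A norm_ge_zero])
  finally show ?thesis by (simp add: power2_eq_square mult.assoc)
qed

lemma num_range_bound: "z \<in> num_range A \<Longrightarrow> cmod z \<le> R"
proof -
  assume "z \<in> num_range A"
  then obtain x where "norm x = 1" "z = cinner (A x) x" unfolding num_range_def by blast
  then show ?thesis using cinner_A_le[of x] by simp
qed

lemma num_range_cball: "num_range A \<subseteq> cball 0 R"
  using num_range_bound by auto

lemma closure_num_range_bound: "z \<in> closure (num_range A) \<Longrightarrow> cmod z \<le> R"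
  using closure_mono[OF num_range_cball] by auto

lemmas tendsto_A = bounded_linear.tendsto[OF bl]
lemmas continuous_on_A = bounded_linear.continuous_on[OF bl]

lemma circle_approx_eig:
  assumes unit: "\<And>n. norm (x n) = 1" and lim: "(\<lambda>n. cinner (A (x n)) (x n)) \<longlonglongrightarrow> a"
    and a: "cmod a = R"
  shows "(\<lambda>n. A (x n) - a *\<^sub>C x n) \<longlonglongrightarrow> 0" and "(\<lambda>n. norm (A (x n))) \<longlonglongrightarrow> R"
proof -
  have le: "(norm (A (x n) - a *\<^sub>C x n))^2 \<le> 2 * R^2 - 2 * Re (cnj a * cinner (A (x n)) (x n))" for n
  proof -
    have "(norm (A (x n)))^2 \<le> R^2" using norm_A_unit[OF unit] by (simp add: norm_ge_zero power_mono)
    then show ?thesis using norm_diff_scaleC_sq[of "A (x n)" a "x n"] unit[of n] a by simp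
  qed
  have "(\<lambda>n. 2 * R^2 - 2 * Re (cnj a * cinner (A (x n)) (x n))) \<longlonglongrightarrow> 2 * R^2 - 2 * Re (cnj a * a)"
    by (intro tendsto_intros lim)
  moreover have "2 * R^2 - 2 * Re (cnj a * a) = 0"
  proof -
    have "cnj a * a = complex_of_real (R^2)" using a complex_norm_square[of a] by (simp add: mult.commute)
    then show ?thesis by simp
  qed
  ultimately have t: "(\<lambda>n. 2 * R^2 - 2 * Re (cnj a * cinner (A (x n)) (x n))) \<longlonglongrightarrow> 0" by simp
  have "(\<lambda>n. (norm (A (x n) - a *\<^sub>C x n))^2) \<longlonglongrightarrow> 0"
    by (rule tendsto_sandwich[OF _ _ tendsto_const t]) (use le in auto)
  then have "(\<lambda>n. sqrt ((norm (A (x n) - a *\<^sub>C x n))^2)) \<longlonglongrightarrow> sqrt 0" by (rule tendsto_real_sqrt)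
  then have n0: "(\<lambda>n. norm (A (x n) - a *\<^sub>C x n)) \<longlonglongrightarrow> 0" by simp
  then show "(\<lambda>n. A (x n) - a *\<^sub>C x n) \<longlonglongrightarrow> 0" by (simp add: tendsto_norm_zero_iff)
  have "(\<lambda>n. norm (A (x n)) - R) \<longlonglongrightarrow> 0"
  proof (rule tendsto_sandwich[of "\<lambda>n. - norm (A (x n) - a *\<^sub>C x n)" _ _ "\<lambda>n. 0"])
    show "\<forall>\<^sub>F n in sequentially. - norm (A (x n) - a *\<^sub>C x n) \<le> norm (A (x n)) - R"
    proof (rule always_eventually, rule allI)
      fix n
      have "norm (a *\<^sub>C x n) = R" using a unit[of n] by (simp add: norm_scaleC)
      then show "- norm (A (x n) - a *\<^sub>C x n) \<le> norm (A (x n)) - R"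
        using norm_triangle_ineq2[of "a *\<^sub>C x n" "A (x n)"] norm_minus_commute by (metis diff_le_eq add.commute le_diff_eq minus_diff_eq norm_minus_cancel uminus_add_conv_diff)
    qed
    show "\<forall>\<^sub>F n in sequentially. norm (A (x n)) - R \<le> 0" using norm_A_unit[OF unit] by simp
    show "(\<lambda>n. - norm (A (x n) - a *\<^sub>C x n)) \<longlonglongrightarrow> 0" using tendsto_minus[OF n0] by simp
  qed simp
  then show "(\<lambda>n. norm (A (x n))) \<longlonglongrightarrow> R" using Lim_null by (simp add: LIM_zero_iff)
qed

end

context cbl begin

lemma normalize_facts:
  assumes "z \<noteq> 0"
  defines "u \<equiv> (1 / norm z) *\<^sub>R z"
  shows "norm u = 1" "cinner (A u) u = cinner (A z) z / complex_of_real ((norm z)^2)"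
    "norm (A u) = norm (A z) / norm z"
  using assms by (auto simp: u_def A_scaleR cinner_scaleR_left cinner_scaleR_right power2_eq_square field_simps)

lemma closure_num_range_seq:
  assumes "p \<in> closure (num_range A)"
  obtains x where "\<And>n. norm (x n) = 1" "(\<lambda>n. cinner (A (x n)) (x n)) \<longlonglongrightarrow> p"
proof -
  obtain w where w: "\<And>n. w n \<in> num_range A" "w \<longlonglongrightarrow> p"
    using assms unfolding closure_sequential by blast
  have "\<forall>n. \<exists>x. norm x = 1 \<and> w n = cinner (A x) x" using w(1) unfolding num_range_def by blast
  then obtain x where x: "\<And>n. norm (x n) = 1 \<and> w n = cinner (A (x n)) (x n)" by metis
  then have "w = (\<lambda>n. cinner (A (x n)) (x n))" by auto
  then show ?thesis using that x w(2) by auto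
qed

lemma ev_shift:
  assumes "eventually (\<lambda>n. z n \<noteq> (0::'a)) sequentially"
  obtains N where "\<And>n. z (n + N) \<noteq> 0"
  using assms unfolding eventually_sequentially by (metis le_add2)

lemma seq_closure:
  assumes nz: "eventually (\<lambda>n. z n \<noteq> 0) sequentially"
    and lim: "(\<lambda>n. cinner (A (z n)) (z n) / complex_of_real ((norm (z n))^2)) \<longlonglongrightarrow> p"
  shows "p \<in> closure (num_range A)"
proof -
  obtain N where N: "\<And>n. z (n + N) \<noteq> 0" using ev_shift[OF nz] by blast
  define u where "u n = (1 / norm (z (n+N))) *\<^sub>R z (n+N)" for n
  have "\<And>n. cinner (A (u n)) (u n) \<in> num_range A"
    using normalize_facts(1)[OF N] unfolding num_range_def u_def by blast
  moreover have "(\<lambda>n. cinner (A (u n)) (u n)) \<longlonglongrightarrow> p"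
    using LIMSEQ_ignore_initial_segment[OF lim, of N] normalize_facts(2)[OF N] unfolding u_def by simp
  ultimately show ?thesis unfolding closure_sequential
    by (intro exI[of _ "\<lambda>n. cinner (A (u n)) (u n)"]) blast
qed

lemma seq_W0:
  assumes nz: "eventually (\<lambda>n. z n \<noteq> 0) sequentially"
    and lim: "(\<lambda>n. cinner (A (z n)) (z n) / complex_of_real ((norm (z n))^2)) \<longlonglongrightarrow> p"
    and limn: "(\<lambda>n. norm (A (z n)) / norm (z n)) \<longlonglongrightarrow> R"
  shows "p \<in> max_num_range A"
proof -
  obtain N where N: "\<And>n. z (n + N) \<noteq> 0" using ev_shift[OF nz] by blast
  define u where "u n = (1 / norm (z (n+N))) *\<^sub>R z (n+N)" for n
  have "\<And>n. norm (u n) = 1" using normalize_facts(1)[OF N] unfolding u_def by blast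
  moreover have "(\<lambda>n. cinner (A (u n)) (u n)) \<longlonglongrightarrow> p"
    using LIMSEQ_ignore_initial_segment[OF lim, of N] normalize_facts(2)[OF N] unfolding u_def by simp
  moreover have "(\<lambda>n. norm (A (u n))) \<longlonglongrightarrow> R"
    using LIMSEQ_ignore_initial_segment[OF limn, of N] normalize_facts(3)[OF N] unfolding u_def by simp
  ultimately show ?thesis unfolding max_num_range_def by blast
qed

lemma W0_seq:
  assumes "p \<in> max_num_range A"
  obtains x where "\<And>n. norm (x n) = 1" "(\<lambda>n. norm (A (x n))) \<longlonglongrightarrow> R"
    "(\<lambda>n. cinner (A (x n)) (x n)) \<longlonglongrightarrow> p"
  using assms unfolding max_num_range_def by blast

lemma W0_closure: "max_num_range A \<subseteq> closure (num_range A)"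
proof
  fix p assume "p \<in> max_num_range A"
  then obtain x where x: "\<And>n. norm (x n) = 1" "(\<lambda>n. cinner (A (x n)) (x n)) \<longlonglongrightarrow> p"
    unfolding max_num_range_def by blast
  have "\<And>n. cinner (A (x n)) (x n) \<in> num_range A" using x(1) unfolding num_range_def by blast
  then show "p \<in> closure (num_range A)" using x(2) unfolding closure_sequential
    by (intro exI[of _ "\<lambda>n. cinner (A (x n)) (x n)"]) blast
qed

lemma approx_eig_spectrum:
  assumes unit: "\<And>n. norm (x n) = 1" and lim: "(\<lambda>n. A (x n) - l *\<^sub>C x n) \<longlonglongrightarrow> 0"
  shows "l \<in> op_spectrum A"
proof (rule ccontr)
  assume "l \<notin> op_spectrum A"
  then obtain B where B: "cbounded_linear B" "\<And>x. B (A x - l *\<^sub>C x) = x"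
    unfolding op_spectrum_def by blast
  interpret b: cbl B by (unfold_locales) (rule B(1))
  have "(\<lambda>n. B (A (x n) - l *\<^sub>C x n)) \<longlonglongrightarrow> B 0" by (rule b.tendsto_A[OF lim])
  then have "x \<longlonglongrightarrow> 0" using B(2) by simp
  then have "(\<lambda>n. norm (x n)) \<longlonglongrightarrow> 0" by (simp add: tendsto_norm_zero_iff)
  then show False using unit by (simp add: LIMSEQ_const_iff)
qed

lemma frontier_circle:
  assumes "p \<in> closure (num_range A)" "cmod p = R"
  shows "p \<in> frontier (num_range A)"
proof -
  have "interior (num_range A) \<subseteq> ball 0 R"
    using interior_mono[OF num_range_cball] by simp
  then have "p \<notin> interior (num_range A)" using assms(2) by auto
  then show ?thesis using assms(1) unfolding frontier_def by blast
qed

lemma W0_bound: "p \<in> max_num_range A \<Longrightarrow> cmod p \<le> R"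
  using W0_closure closure_num_range_bound by blast

end

lemma norm_comb_sq:
  "(norm (c *\<^sub>C x + d *\<^sub>C (y::'a::complex_inner)))^2
     = (cmod c)^2 * (norm x)^2 + (cmod d)^2 * (norm y)^2 + 2 * Re (c * cnj d * cinner x y)"
proof -
  have "(norm (c *\<^sub>C x + d *\<^sub>C y))^2 = Re (cinner (c *\<^sub>C x + d *\<^sub>C y) (c *\<^sub>C x + d *\<^sub>C y))"
    by (simp add: Re_cinner_self)
  also have "cinner (c *\<^sub>C x + d *\<^sub>C y) (c *\<^sub>C x + d *\<^sub>C y)
     = (c * cnj c) * cinner x x + c * cnj d * cinner x y + d * cnj c * cinner y x + (d * cnj d) * cinner y y"
    by (simp only: cinner_add_left cinner_add_right cinner_scaleC_left cinner_scaleC_right)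
      (simp add: ring_distribs mult_ac add_ac)
  also have "cinner y x = cnj (cinner x y)" by (rule cinner_commute)
  finally show ?thesis
    by (simp add: cinner_self complex_norm_square[symmetric] power_mult_distrib algebra_simps)
qed

lemma norm_combR_sq:
  "(norm (a *\<^sub>R x + b *\<^sub>R (y::'a::complex_inner)))^2
     = a^2 * (norm x)^2 + b^2 * (norm y)^2 + 2 * a * b * Re (cinner x y)"
  using norm_comb_sq[of "complex_of_real a" x "complex_of_real b" y] by (simp add: scaleC_of_real)

lemma cinner_null_left:
  assumes "e \<longlonglongrightarrow> 0" "\<And>n. norm (w n) \<le> K"
  shows "(\<lambda>n. cinner (e n) (w n :: 'a::complex_inner)) \<longlonglongrightarrow> 0"
proof (rule Lim_null_comparison[of _ "\<lambda>n. norm (e n) * K"])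
  show "\<forall>\<^sub>F n in sequentially. norm (cinner (e n) (w n)) \<le> norm (e n) * K"
    by (intro always_eventually allI) (rule order_trans[OF cinner_CS mult_left_mono[OF assms(2) norm_ge_zero]])
  show "(\<lambda>n. norm (e n) * K) \<longlonglongrightarrow> 0"
    using tendsto_mult[OF tendsto_norm[OF assms(1)] tendsto_const[of K]] by simp
qed

lemma cinner_null_right:
  assumes "e \<longlonglongrightarrow> 0" "\<And>n. norm (w n) \<le> K"
  shows "(\<lambda>n. cinner (w n) (e n :: 'a::complex_inner)) \<longlonglongrightarrow> 0"
proof -
  have "(\<lambda>n. cnj (cinner (e n) (w n))) \<longlonglongrightarrow> cnj 0"
    by (rule tendsto_cnj[OF cinner_null_left[OF assms]])
  then show ?thesis by (subst cinner_commute) simp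
qed

context cbl begin

lemma cinner_A_comb:
  "cinner (A (a *\<^sub>R x + b *\<^sub>R y)) (a *\<^sub>R x + b *\<^sub>R y)
   = complex_of_real (a^2) * cinner (A x) x + complex_of_real (a*b) * (cinner (A x) y + cinner (A y) x)
     + complex_of_real (b^2) * cinner (A y) y"
  by (simp only: A_add A_scaleR cinner_add_left cinner_add_right cinner_scaleR_left cinner_scaleR_right)
    (simp add: ring_distribs mult_ac add_ac power2_eq_square)

lemma chord_W0:
  assumes a: "a \<in> closure (num_range A)" "cmod a = R"
    and b: "b \<in> closure (num_range A)" "cmod b = R"
    and ab: "a \<noteq> b" and p: "p \<in> closed_segment a b"
  shows "p \<in> max_num_range A"
proof -
  obtain x where x: "\<And>n. norm (x n) = 1" "(\<lambda>n. cinner (A (x n)) (x n)) \<longlonglongrightarrow> a"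
    using closure_num_range_seq[OF a(1)] by blast
  obtain y where y: "\<And>n. norm (y n) = 1" "(\<lambda>n. cinner (A (y n)) (y n)) \<longlonglongrightarrow> b"
    using closure_num_range_seq[OF b(1)] by blast
  define e where "e n = A (x n) - a *\<^sub>C x n" for n
  define f where "f n = A (y n) - b *\<^sub>C y n" for n
  have e0: "e \<longlonglongrightarrow> 0" unfolding e_def by (rule circle_approx_eig(1)[OF x a(2)])
  have f0: "f \<longlonglongrightarrow> 0" unfolding f_def by (rule circle_approx_eig(1)[OF y b(2)])
  have nAx: "(\<lambda>n. norm (A (x n))) \<longlonglongrightarrow> R" by (rule circle_approx_eig(2)[OF x a(2)])
  have nAy: "(\<lambda>n. norm (A (y n))) \<longlonglongrightarrow> R" by (rule circle_approx_eig(2)[OF y b(2)])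
  have Ax: "A (x n) = a *\<^sub>C x n + e n" for n unfolding e_def by simp
  have Ay: "A (y n) = b *\<^sub>C y n + f n" for n unfolding f_def by simp
  have Rpos: "R > 0"
  proof (rule ccontr)
    assume "\<not> R > 0" then have "R = 0" using R_nonneg by simp
    then show False using a(2) b(2) ab by simp
  qed
  define k where "k = complex_of_real (R^2) - a * cnj b"
  have k0: "k \<noteq> 0"
  proof
    assume "k = 0"
    then have "a * cnj b = b * cnj b" unfolding k_def using b(2) complex_norm_square[of b] by simp
    moreover have "cnj b \<noteq> 0" using b(2) Rpos by auto
    ultimately show False using ab by simp
  qed
  define g where "g n = cinner (x n) (y n)" for n
  define h where "h n = g n * k" for n
  have h0: "h \<longlonglongrightarrow> 0"
  proof -
    define D where "D n = norm (e n) + norm (f n)" for n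
    have D0: "D \<longlonglongrightarrow> 0" unfolding D_def using tendsto_add[OF tendsto_norm[OF e0] tendsto_norm[OF f0]] by simp
    have bound: "cmod (h n) \<le> 2 * R * D n + (D n)^2 / 2" for n
    proof -
      define s where "s = (if h n = 0 then 1 else - (h n / complex_of_real (cmod (h n))))"
      have s1: "cmod s = 1" unfolding s_def by (auto simp: norm_divide)
      have sh: "Re (cnj s * h n) = - cmod (h n)"
      proof (cases "h n = 0")
        case True then show ?thesis unfolding s_def by simp
      next
        case False
        have "cnj s * h n = - (cnj (h n) * h n) / complex_of_real (cmod (h n))"
          using False unfolding s_def by simp
        also have "cnj (h n) * h n = complex_of_real ((cmod (h n))^2)"
          using complex_norm_square[of "h n"] by (simp add: mult.commute)
        finally show ?thesis using False by (simp add: power2_eq_square)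
      qed
      define v where "v = x n + s *\<^sub>C y n"
      define M where "M = a *\<^sub>C x n + (s * b) *\<^sub>C y n"
      have v2: "(norm v)^2 = 2 + 2 * Re (cnj s * g n)"
        using norm_comb_sq[of 1 "x n" s "y n"] x(1) y(1) s1 unfolding v_def g_def by (simp add: scaleC_one)
      have M2: "(norm M)^2 = 2 * R^2 + 2 * Re (a * cnj b * cnj s * g n)"
        using norm_comb_sq[of a "x n" "s*b" "y n"] x(1) y(1) s1 a(2) b(2) unfolding M_def g_def
        by (simp add: norm_mult mult.assoc algebra_simps)
      have diff: "(norm M)^2 - R^2 * (norm v)^2 = 2 * cmod (h n)"
      proof -
        have "(norm M)^2 - R^2 * (norm v)^2 = - 2 * Re (cnj s * h n)"
          unfolding M2 v2 h_def k_def by (simp add: algebra_simps)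
        then show ?thesis using sh by simp
      qed
      have vle: "norm v \<le> 2"
        using norm_triangle_ineq[of "x n" "s *\<^sub>C y n"] x(1) y(1) s1 unfolding v_def by (simp add: norm_scaleC)
      have AvM: "A v = M + (e n + s *\<^sub>C f n)"
        unfolding v_def M_def by (simp add: A_add A_scaleC Ax Ay scaleC_add_right scaleC_scaleC algebra_simps)
      have dle: "norm (e n + s *\<^sub>C f n) \<le> D n"
        using norm_triangle_ineq[of "e n" "s *\<^sub>C f n"] s1 unfolding D_def by (simp add: norm_scaleC)
      have "norm M \<le> norm (A v) + norm (e n + s *\<^sub>C f n)"
        using AvM norm_triangle_ineq4[of "A v" "e n + s *\<^sub>C f n"] by (metis add_diff_cancel_right')
      also have "\<dots> \<le> R * norm v + D n" using norm_A[of v] dle by simp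
      finally have Mle: "norm M \<le> R * norm v + D n" .
      have "(norm M)^2 \<le> (R * norm v + D n)^2" using Mle by (simp add: power_mono)
      also have "\<dots> = R^2 * (norm v)^2 + 2 * R * D n * norm v + (D n)^2" by (simp add: power2_eq_square algebra_simps)
      also have "\<dots> \<le> R^2 * (norm v)^2 + 4 * R * D n + (D n)^2"
      proof -
        have "D n \<ge> 0" unfolding D_def by simp
        then have "2 * R * D n * norm v \<le> 2 * R * D n * 2" using vle Rpos by (intro mult_left_mono) auto
        then show ?thesis by simp
      qed
      finally show ?thesis using diff by simp
    qed
    have "(\<lambda>n. 2 * R * D n + (D n)^2 / 2) \<longlonglongrightarrow> 2 * R * 0 + 0^2/2" by (intro tendsto_intros D0) simp
    then have "(\<lambda>n. 2 * R * D n + (D n)^2 / 2) \<longlonglongrightarrow> 0" by simp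
    then show ?thesis by (rule Lim_null_comparison[rotated]) (use bound in auto)
  qed
  have g0: "g \<longlonglongrightarrow> 0"
  proof -
    have "(\<lambda>n. h n / k) \<longlonglongrightarrow> 0 / k" using k0 by (intro tendsto_intros h0)
    then show ?thesis using k0 unfolding h_def by simp
  qed
  have nAxb: "norm (A (x n)) \<le> R" "norm (A (y n)) \<le> R" for n using norm_A_unit x(1) y(1) by auto
  have cxy: "(\<lambda>n. cinner (A (x n)) (y n)) \<longlonglongrightarrow> 0"
  proof -
    have "(\<lambda>n. a * g n + cinner (e n) (y n)) \<longlonglongrightarrow> a * 0 + 0"
      by (intro tendsto_intros g0 cinner_null_left[OF e0, of _ 1]) (simp add: y(1))
    then show ?thesis by (simp add: Ax cinner_add_left cinner_scaleC_left g_def)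
  qed
  have cyx: "(\<lambda>n. cinner (A (y n)) (x n)) \<longlonglongrightarrow> 0"
  proof -
    have "(\<lambda>n. b * cnj (g n) + cinner (f n) (x n)) \<longlonglongrightarrow> b * cnj 0 + 0"
      by (intro tendsto_intros g0 cinner_null_left[OF f0, of _ 1]) (simp add: x(1))
    moreover have "cinner (y n) (x n) = cnj (g n)" for n unfolding g_def by (rule cinner_commute)
    ultimately show ?thesis by (simp add: Ay cinner_add_left cinner_scaleC_left)
  qed
  have cAxAy: "(\<lambda>n. cinner (A (x n)) (A (y n))) \<longlonglongrightarrow> 0"
  proof -
    have "(\<lambda>n. a * (cnj b * g n + cinner (x n) (f n)) + cinner (e n) (A (y n))) \<longlonglongrightarrow> a * (cnj b * 0 + 0) + 0"
      by (intro tendsto_intros g0 cinner_null_right[OF f0, of _ 1] cinner_null_left[OF e0, of _ R])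
        (simp_all add: x(1) nAxb)
    moreover have "cinner (x n) (A (y n)) = cnj b * g n + cinner (x n) (f n)" for n
      unfolding Ay g_def by (simp add: cinner_add_right cinner_scaleC_right)
    moreover have "cinner (A (x n)) (A (y n)) = a * cinner (x n) (A (y n)) + cinner (e n) (A (y n))" for n
      by (subst (1) Ax) (simp add: cinner_add_left cinner_scaleC_left)
    ultimately show ?thesis by simp
  qed
  obtain t where t: "0 \<le> t" "t \<le> 1" "p = (1 - t) *\<^sub>R a + t *\<^sub>R b"
    using p unfolding closed_segment_def by blast
  define \<alpha> where "\<alpha> = sqrt (1 - t)"
  define \<beta> where "\<beta> = sqrt t"
  have al2: "\<alpha>^2 = 1 - t" unfolding \<alpha>_def using t by simp
  have be2: "\<beta>^2 = t" unfolding \<beta>_def using t by simp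
  define z where "z n = \<alpha> *\<^sub>R x n + \<beta> *\<^sub>R y n" for n
  have z2: "(\<lambda>n. (norm (z n))^2) \<longlonglongrightarrow> 1"
  proof -
    have "(\<lambda>n. \<alpha>^2 + \<beta>^2 + 2 * \<alpha> * \<beta> * Re (g n)) \<longlonglongrightarrow> \<alpha>^2 + \<beta>^2 + 2 * \<alpha> * \<beta> * Re 0"
      by (intro tendsto_intros g0)
    then show ?thesis using al2 be2 x(1) y(1)
      by (simp add: z_def norm_combR_sq g_def)
  qed
  have Az2: "(\<lambda>n. (norm (A (z n)))^2) \<longlonglongrightarrow> R^2"
  proof -
    have "(\<lambda>n. \<alpha>^2 * (norm (A (x n)))^2 + \<beta>^2 * (norm (A (y n)))^2 + 2 * \<alpha> * \<beta> * Re (cinner (A (x n)) (A (y n))))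
       \<longlonglongrightarrow> \<alpha>^2 * R^2 + \<beta>^2 * R^2 + 2 * \<alpha> * \<beta> * Re 0"
      by (intro tendsto_intros nAx nAy cAxAy)
    moreover have "\<alpha>^2 * R^2 + \<beta>^2 * R^2 + 2 * \<alpha> * \<beta> * Re 0 = R^2"
      by (simp add: al2 be2 algebra_simps)
    moreover have "(norm (A (z n)))^2 = \<alpha>^2 * (norm (A (x n)))^2 + \<beta>^2 * (norm (A (y n)))^2 + 2 * \<alpha> * \<beta> * Re (cinner (A (x n)) (A (y n)))" for n
      by (simp add: z_def A_add A_scaleR norm_combR_sq)
    ultimately show ?thesis by simp
  qed
  have Azz: "(\<lambda>n. cinner (A (z n)) (z n)) \<longlonglongrightarrow> p"
  proof -
    have "(\<lambda>n. complex_of_real (\<alpha>^2) * cinner (A (x n)) (x n) + complex_of_real (\<alpha>*\<beta>) * (cinner (A (x n)) (y n) + cinner (A (y n)) (x n))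
     + complex_of_real (\<beta>^2) * cinner (A (y n)) (y n)) \<longlonglongrightarrow>
      complex_of_real (\<alpha>^2) * a + complex_of_real (\<alpha>*\<beta>) * (0 + 0) + complex_of_real (\<beta>^2) * b"
      by (intro tendsto_intros x(2) y(2) cxy cyx)
    moreover have "complex_of_real (\<alpha>^2) * a + complex_of_real (\<alpha>*\<beta>) * (0 + 0) + complex_of_real (\<beta>^2) * b = p"
      by (simp add: al2 be2 t(3) scaleR_conv_of_real)
    ultimately show ?thesis by (simp add: z_def cinner_A_comb)
  qed
  have nz: "eventually (\<lambda>n. z n \<noteq> 0) sequentially"
  proof -
    have "eventually (\<lambda>n. (norm (z n))^2 > 1/2) sequentially"
      using order_tendstoD(1)[OF z2, of "1/2"] by simp
    then show ?thesis by eventually_elim auto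
  qed
  show ?thesis
  proof (rule seq_W0[OF nz])
    have "(\<lambda>n. cinner (A (z n)) (z n) / complex_of_real ((norm (z n))^2)) \<longlonglongrightarrow> p / complex_of_real 1"
      by (intro tendsto_intros Azz z2) simp
    then show "(\<lambda>n. cinner (A (z n)) (z n) / complex_of_real ((norm (z n))^2)) \<longlonglongrightarrow> p" by simp
    have "(\<lambda>n. sqrt ((norm (A (z n)))^2) / sqrt ((norm (z n))^2)) \<longlonglongrightarrow> sqrt (R^2) / sqrt 1"
      by (intro tendsto_intros Az2 z2) simp
    then show "(\<lambda>n. norm (A (z n)) / norm (z n)) \<longlonglongrightarrow> R" using R_nonneg by simp
  qed
qed

end

lemma cbl_shift:
  assumes "cbounded_linear (A::'a::complex_inner \<Rightarrow> 'a)"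
  shows "cbounded_linear (\<lambda>x. A x - l *\<^sub>C x)"
proof -
  interpret cbl A by unfold_locales (rule assms)
  have "norm (A x - l *\<^sub>C x) \<le> (R + cmod l) * norm x" for x
    using norm_triangle_ineq4[of "A x" "l *\<^sub>C x"] norm_A[of x] by (simp add: norm_scaleC algebra_simps)
  moreover have "A (x + y) - l *\<^sub>C (x + y) = (A x - l *\<^sub>C x) + (A y - l *\<^sub>C y)" for x y
    by (simp add: A_add scaleC_add_right)
  moreover have "A (c *\<^sub>C x) - l *\<^sub>C (c *\<^sub>C x) = c *\<^sub>C (A x - l *\<^sub>C x)" for c x
    by (simp add: A_scaleC scaleC_diff_right scaleC_scaleC mult.commute)
  ultimately show ?thesis unfolding cbounded_linear_def by blast
qed

lemma bounded_below_closed_range: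
  fixes T :: "'a::chilbert_space \<Rightarrow> 'a"
  assumes T: "cbounded_linear T" and c: "c > 0" and bb: "\<And>x. c * norm x \<le> norm (T x)"
  shows "closed (range T)"
proof -
  interpret t: cbl T by unfold_locales (rule T)
  show ?thesis
  unfolding closed_sequential_limits
  proof (intro allI impI, elim conjE)
    fix s l assume s: "\<forall>n. s n \<in> range T" and sl: "s \<longlonglongrightarrow> l"
    have "\<forall>n. \<exists>w. s n = T w" using s by blast
    then obtain z where z: "\<And>n. s n = T (z n)" by (metis choice)
    have cs: "Cauchy s" using sl by (rule LIMSEQ_imp_Cauchy)
    have "Cauchy z"
      unfolding Cauchy_def
    proof (intro allI impI)
      fix e :: real assume "e > 0"
      then obtain M where M: "\<forall>m\<ge>M. \<forall>n\<ge>M. dist (s m) (s n) < c * e"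
        using cs c unfolding Cauchy_def by (meson mult_pos_pos)
      show "\<exists>M. \<forall>m\<ge>M. \<forall>n\<ge>M. dist (z m) (z n) < e"
      proof (intro exI allI impI)
        fix m n assume "m \<ge> M" "n \<ge> M"
        then have "dist (s m) (s n) < c * e" using M by blast
        moreover have "c * dist (z m) (z n) \<le> dist (s m) (s n)"
          using bb[of "z m - z n"] by (simp add: dist_norm z t.A_diff)
        ultimately have "c * dist (z m) (z n) < c * e" by linarith
        then show "dist (z m) (z n) < e" using c by simp
      qed
    qed
    then obtain L where "z \<longlonglongrightarrow> L" using Cauchy_convergent convergent_def by blast
    then have "(\<lambda>n. T (z n)) \<longlonglongrightarrow> T L" by (rule t.tendsto_A)
    moreover have "s = (\<lambda>n. T (z n))" using z by auto
    ultimately have "s \<longlonglongrightarrow> T L" by simp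
    then have "l = T L" using sl LIMSEQ_unique by blast
    then show "l \<in> range T" by simp
  qed
qed

lemma spec_circle_approx:
  fixes A :: "'a::chilbert_space \<Rightarrow> 'a"
  assumes cblA: "cbounded_linear A" and ls: "l \<in> op_spectrum A" and lR: "cmod l = onorm A"
  shows "\<exists>x. (\<forall>n. norm (x n) = 1) \<and> (\<lambda>n. A (x n) - l *\<^sub>C x n) \<longlonglongrightarrow> 0"
proof (rule ccontr)
  interpret cbl A by unfold_locales (rule cblA)
  define T where "T x = A x - l *\<^sub>C x" for x
  have cblT: "cbounded_linear T" unfolding T_def by (rule cbl_shift[OF cblA])
  interpret t: cbl T by unfold_locales (rule cblT)
  assume na: "\<not> ?thesis"
  have "\<exists>c>0. \<forall>x. c * norm x \<le> norm (T x)"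
  proof (rule ccontr)
    assume "\<not> ?thesis"
    then have nc: "\<forall>c>0. \<exists>x. \<not> c * norm x \<le> norm (T x)" by blast
    have "\<exists>x. norm (T x) < (1 / (real n + 1)) * norm x" for n :: nat
    proof -
      have "1 / (real n + 1) > 0" by simp
      then obtain x where "\<not> (1 / (real n + 1)) * norm x \<le> norm (T x)" using nc by blast
      then show ?thesis by (intro exI[of _ x]) simp
    qed
    then obtain x where x: "\<And>n. norm (T (x n)) < (1 / (real n + 1)) * norm (x n)" by metis
    have xnz: "x n \<noteq> 0" for n using x[of n] by auto
    define u where "u n = (1 / norm (x n)) *\<^sub>R x n" for n
    have u1: "norm (u n) = 1" for n using xnz unfolding u_def by simp
    have Tu: "norm (T (u n)) < 1 / (real n + 1)" for n
      using x[of n] xnz unfolding u_def by (simp add: t.A_scaleR field_simps)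
    have "(\<lambda>n. T (u n)) \<longlonglongrightarrow> 0"
    proof (rule Lim_null_comparison[of _ "\<lambda>n. 1 / (real n + 1)"])
      show "\<forall>\<^sub>F n in sequentially. norm (T (u n)) \<le> 1 / (real n + 1)"
        using Tu less_imp_le by (intro always_eventually allI) blast
      show "(\<lambda>n. 1 / (real n + 1)) \<longlonglongrightarrow> 0"
        using LIMSEQ_inverse_real_of_nat by (simp add: inverse_eq_divide add.commute)
    qed
    then show False using na u1 unfolding T_def by blast
  qed
  then obtain c where c: "c > 0" "\<And>x. c * norm x \<le> norm (T x)" by blast
  have inj: "inj T"
  proof (rule injI)
    fix x y assume "T x = T y"
    then have "c * norm (x - y) \<le> 0" using c(2)[of "x - y"] by (simp add: t.A_diff)
    then show "x = y" using c(1) by (simp add: mult_le_0_iff)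
  qed
  have cl: "closed (range T)" by (rule bounded_below_closed_range[OF cblT c])
  have surj: "surj T"
  proof (cases "l = 0")
    case True
    then have "R = 0" using lR by simp
    then have A0: "\<And>x. A x = 0" using onorm_eq_0[OF bl] by simp
    have "x = 0" for x :: 'a
    proof -
      have "c * norm x \<le> norm (T x)" by (rule c(2))
      also have "T x = 0" unfolding T_def using True A0 by simp
      finally show ?thesis using c(1) by (simp add: mult_le_0_iff)
    qed
    then show ?thesis by (metis surjI)
  next
    case False
    have Rpos: "R > 0" using False lR by (metis zero_less_norm_iff)
    have "y \<in> closure (range T)" for y
      unfolding closure_approachable
    proof (intro allI impI)
      fix \<epsilon> :: real assume ep: "\<epsilon> > 0"
      define \<delta> where "\<delta> = min (c / (2 * R)) (\<epsilon> * c / (4 * R * (norm y + 1)))"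
      have p1: "c / (2 * R) > 0" using c(1) Rpos by simp
      have ny: "norm y + 1 > 0" using norm_ge_zero[of y] by linarith
      have p2: "\<epsilon> * c / (4 * R * (norm y + 1)) > 0"
        using c(1) Rpos ep ny by (intro divide_pos_pos mult_pos_pos) auto
      have dpos: "\<delta> > 0" unfolding \<delta>_def using p1 p2 by simp
      have d1: "\<delta> * R \<le> c / 2"
      proof -
        have "\<delta> \<le> c / (2 * R)" unfolding \<delta>_def by simp
        then have "\<delta> * R \<le> c / (2 * R) * R" using Rpos by (intro mult_right_mono) auto
        also have "\<dots> = c / 2" using Rpos by simp
        finally show ?thesis .
      qed
      have d2: "\<delta> * R \<le> \<epsilon> * c / (4 * (norm y + 1))"
      proof -
        have "\<delta> \<le> \<epsilon> * c / (4 * R * (norm y + 1))" unfolding \<delta>_def by simp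
        then have "\<delta> * R \<le> \<epsilon> * c / (4 * R * (norm y + 1)) * R" using Rpos by (intro mult_right_mono) auto
        also have "\<dots> = \<epsilon> * c / (4 * (norm y + 1))" using Rpos by simp
        finally show ?thesis .
      qed
      have cm: "cmod (1 + complex_of_real \<delta>) = 1 + \<delta>"
      proof -
        have "1 + complex_of_real \<delta> = complex_of_real (1 + \<delta>)" by simp
        then show ?thesis using dpos by (simp only: norm_of_real)
      qed
      have nz1: "1 + complex_of_real \<delta> \<noteq> 0"
      proof
        assume "1 + complex_of_real \<delta> = 0"
        then have "cmod (1 + complex_of_real \<delta>) = 0" by simp
        then show False using cm dpos by simp
      qed
      define f where "f v = (1 / ((1 + \<delta>) * l)) *\<^sub>C (A v - y)" for v
      have "\<exists>!x. f x = x"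
      proof (rule banach_fix_type)
        show "0 \<le> 1 / (1 + \<delta>)" "1 / (1 + \<delta>) < 1" using dpos by auto
        show "\<forall>v w. dist (f v) (f w) \<le> 1 / (1 + \<delta>) * dist v w"
        proof (intro allI)
          fix v w
          have "f v - f w = (1 / ((1 + \<delta>) * l)) *\<^sub>C A (v - w)"
            unfolding f_def by (simp add: A_diff scaleC_diff_right)
          then have "dist (f v) (f w) = norm (A (v - w)) / ((1 + \<delta>) * R)"
            using dpos lR cm by (simp add: dist_norm norm_scaleC norm_divide norm_mult)
          also have "\<dots> \<le> (R * norm (v - w)) / ((1 + \<delta>) * R)"
            using dpos Rpos norm_A[of "v - w"] by (intro divide_right_mono) auto
          also have "\<dots> = 1 / (1 + \<delta>) * dist v w" using Rpos by (simp add: dist_norm)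
          finally show "dist (f v) (f w) \<le> 1 / (1 + \<delta>) * dist v w" .
        qed
      qed
      then obtain x where fx: "f x = x" by blast
      have "((1 + \<delta>) * l) *\<^sub>C x = A x - y"
      proof -
        have "((1 + \<delta>) * l) *\<^sub>C x = ((1 + \<delta>) * l) *\<^sub>C f x" using fx by simp
        also have "\<dots> = A x - y" unfolding f_def using False dpos nz1
          by (simp add: scaleC_scaleC scaleC_one)
        finally show ?thesis .
      qed
      then have "T x - y = ((1 + \<delta>) * l) *\<^sub>C x - l *\<^sub>C x"
        unfolding T_def by (simp add: algebra_simps)
      also have "\<dots> = ((1 + \<delta>) * l - l) *\<^sub>C x" by (simp add: scaleC_diff_left)
      also have "(1 + \<delta>) * l - l = complex_of_real \<delta> * l" by (simp add: algebra_simps)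
      finally have Txy: "T x - y = (complex_of_real \<delta> * l) *\<^sub>C x" .
      have nTxy: "norm (T x - y) = \<delta> * R * norm x"
        using Txy dpos lR by (simp add: norm_scaleC norm_mult)
      have "c * norm x \<le> norm (T x)" by (rule c(2))
      also have "\<dots> \<le> norm y + norm (T x - y)" by (metis add.commute diff_add_cancel norm_triangle_ineq)
      also have "\<dots> \<le> norm y + c / 2 * norm x"
      proof -
        have "\<delta> * R * norm x \<le> c / 2 * norm x" using d1 by (intro mult_right_mono) auto
        then show ?thesis using nTxy by simp
      qed
      finally have nx: "norm x \<le> 2 * norm y / c" using c(1) by (simp add: field_simps)
      have "norm (T x - y) \<le> (\<epsilon> * c / (4 * (norm y + 1))) * (2 * norm y / c)"
        unfolding nTxy using d2 nx dpos Rpos ep c(1) ny by (intro mult_mono) auto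
      also have "\<dots> = \<epsilon> * (norm y / (2 * (norm y + 1)))" using c(1) ny by (simp add: field_simps)
      also have "\<dots> < \<epsilon> * 1" using ep ny by (intro mult_strict_left_mono) (auto simp: field_simps)
      finally show "\<exists>x'\<in>range T. dist x' y < \<epsilon>" by (auto simp: dist_norm)
    qed
    then show ?thesis using cl by (auto simp: closure_closed)
  qed
  define B where "B = inv T"
  have TB: "T (B y) = y" for y unfolding B_def using surj by (simp add: surj_f_inv_f)
  have BT: "B (T x) = x" for x unfolding B_def using inj by (simp add: inv_f_f)
  have "cbounded_linear B"
    unfolding cbounded_linear_def
  proof (intro conjI allI exI)
    show "B (x + y) = B x + B y" for x y using inj by (metis TB t.A_add injD)
    show "B (a *\<^sub>C x) = a *\<^sub>C B x" for a x using inj by (metis TB t.A_scaleC injD)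
    show "norm (B x) \<le> (1 / c) * norm x" for x using c(2)[of "B x"] c(1) TB by (simp add: field_simps)
  qed
  then have "l \<notin> op_spectrum A" unfolding op_spectrum_def using TB BT unfolding T_def by blast
  then show False using ls by blast
qed

lemma inner_complex_Re: "inner a (z::complex) = Re (cnj a * z)"
  by (simp add: inner_complex_def)

lemma support_line:
  fixes S :: "complex set"
  assumes cS: "convex S" and pc: "p \<in> closure S" and pi: "p \<notin> interior S"
  obtains d where "cmod d = 1" "\<And>z. z \<in> S \<Longrightarrow> Re (cnj d * z) \<le> Re (cnj d * p)"
proof -
  have "\<exists>a. a \<noteq> 0 \<and> (\<forall>z\<in>S. inner a p \<le> inner a z)"
  proof (cases "aff_dim S = 2")
    case True
    then have ri: "rel_interior S = interior S" by (intro interior_rel_interior) simp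
    obtain a where "a \<noteq> 0" "\<And>y. y \<in> closure S \<Longrightarrow> a \<bullet> p \<le> a \<bullet> y"
      using supporting_hyperplane_relative_frontier[OF cS pc] pi ri by metis
    then show ?thesis using closure_subset by blast
  next
    case False
    then have "aff_dim S < DIM(complex)" using aff_dim_le_DIM[of S] by simp
    then obtain a b where ab: "a \<noteq> 0" "S \<subseteq> {x. a \<bullet> x = b}" by (rule aff_lowdim_subset_hyperplane)
    have "closure S \<subseteq> {x. a \<bullet> x = b}" using ab(2) closed_hyperplane by (rule closure_minimal)
    then have "a \<bullet> p = b" using pc by blast
    then show ?thesis using ab by (intro exI[of _ a]) auto
  qed
  then obtain a where a: "a \<noteq> 0" "\<And>z. z \<in> S \<Longrightarrow> inner a p \<le> inner a z" by blast
  define d where "d = - a / complex_of_real (cmod a)"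
  have "cmod d = 1" using a(1) unfolding d_def by (simp add: norm_divide)
  moreover have "Re (cnj d * z) \<le> Re (cnj d * p)" if "z \<in> S" for z
  proof -
    have "Re (cnj d * w) = - inner a w / cmod a" for w
      unfolding d_def inner_complex_Re by (simp add: Re_divide_of_real) (simp add: add_divide_distrib diff_divide_distrib)
    then show ?thesis using a(2)[OF that] a(1) by (simp add: divide_right_mono)
  qed
  ultimately show ?thesis using that by blast
qed

lemma abs_alg:
  fixes S W2 W1 K r d a c b :: complex
  assumes "S = (W2 - W1) * K + W1 * r" "d = a + c"
  shows "a * W1 + b * S + c * W2 - W1 * (d + b * r) = (W2 - W1) * (b * K + c)"
  unfolding assms by (simp add: algebra_simps)

context cbl begin

lemma TH_core:
  assumes x: "norm x = 1" and y: "norm y = 1" and ne: "cinner (A x) x \<noteq> cinner (A y) y"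
    and v: "0 \<le> v" "v \<le> 1"
  shows "\<exists>z. norm z = 1 \<and> cinner (A z) z = cinner (A x) x + complex_of_real v * (cinner (A y) y - cinner (A x) x)"
proof -
  define w1 where "w1 = cinner (A x) x"
  define w2 where "w2 = cinner (A y) y"
  define q where "q = w2 - w1"
  have q0: "q \<noteq> 0" using ne unfolding q_def w1_def w2_def by simp
  define p1 where "p1 = (cinner (A x) y - w1 * cinner x y) / q"
  define p2 where "p2 = (cinner (A y) x - w1 * cinner y x) / q"
  define dd where "dd = p2 - cnj p1"
  define e where "e = (if dd = 0 then 1 else cnj dd / complex_of_real (cmod dd))"
  have e1: "cmod e = 1" unfolding e_def by (auto simp: norm_divide)
  have ee: "e * cnj e = 1" using e1 complex_norm_square[of e] by simp
  have ee': "cnj e * e = 1" using ee by (simp add: mult.commute)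
  have Imed: "Im (e * dd) = 0"
  proof (cases "dd = 0")
    case True then show ?thesis by (simp add: e_def)
  next
    case False
    have "e * dd = (dd * cnj dd) / complex_of_real (cmod dd)" unfolding e_def using False by (simp add: mult.commute)
    also have "dd * cnj dd = complex_of_real ((cmod dd)^2)" by (rule complex_norm_square[symmetric])
    finally have "e * dd = complex_of_real ((cmod dd)^2) / complex_of_real (cmod dd)" .
    then show ?thesis by (metis Im_complex_of_real of_real_divide)
  qed
  define y' where "y' = e *\<^sub>C y"
  have y'1: "norm y' = 1" unfolding y'_def using e1 y by (simp add: norm_scaleC)
  have Ay'y': "cinner (A y') y' = w2" unfolding y'_def w2_def
    using ee by (simp add: A_scaleC cinner_scaleC_left cinner_scaleC_right mult.assoc[symmetric] ee')
  define \<kappa> where "\<kappa> = cnj e * p1 + e * p2"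
  have Imk: "Im \<kappa> = 0"
  proof -
    have "Im \<kappa> = Im (e * dd)" unfolding \<kappa>_def dd_def by (simp add: algebra_simps)
    then show ?thesis using Imed by simp
  qed
  have kq: "cinner (A x) y' + cinner (A y') x - w1 * complex_of_real (2 * Re (cinner x y')) = q * \<kappa>"
  proof -
    have "complex_of_real (2 * Re (cinner x y')) = cinner x y' + cinner y' x"
      using cinner_commute[of y' x] by (simp add: complex_add_cnj)
    moreover have "cinner x y' = cnj e * cinner x y" "cinner y' x = e * cinner y x"
      "cinner (A x) y' = cnj e * cinner (A x) y" "cinner (A y') x = e * cinner (A y) x"
      unfolding y'_def by (simp_all add: cinner_scaleC_left cinner_scaleC_right A_scaleC)
    ultimately show ?thesis unfolding \<kappa>_def p1_def p2_def using q0 by (simp add: field_simps)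
  qed
  define z where "z t = (1 - t) *\<^sub>R x + t *\<^sub>R y'" for t
  define \<rho> where "\<rho> = Re (cinner x y')"
  have nz2: "(norm (z t))^2 = (1-t)^2 + t^2 + 2 * (1-t) * t * \<rho>" for t
    unfolding z_def \<rho>_def using norm_combR_sq[of "1-t" x t y'] x y'1 by simp
  have Hz: "cinner (A (z t)) (z t) - w1 * complex_of_real ((norm (z t))^2)
      = q * complex_of_real ((1-t) * t * Re \<kappa> + t^2)" for t
  proof -
    have "cinner (A (z t)) (z t) = complex_of_real ((1-t)^2) * w1 + complex_of_real ((1-t)*t) * (cinner (A x) y' + cinner (A y') x)
      + complex_of_real (t^2) * w2" unfolding z_def w1_def by (simp add: cinner_A_comb Ay'y'[unfolded w2_def] w2_def)
    moreover have "complex_of_real ((norm (z t))^2) = complex_of_real ((1-t)^2 + t^2) + complex_of_real ((1-t)*t) * complex_of_real (2 * Re (cinner x y'))"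
      unfolding nz2 \<rho>_def by simp
    moreover have "\<kappa> = complex_of_real (Re \<kappa>)" using Imk by (simp add: complex_eq_iff)
    moreover have "cinner (A x) y' + cinner (A y') x = q * \<kappa> + w1 * complex_of_real (2 * Re (cinner x y'))"
      using kq by (simp add: algebra_simps)
    ultimately show ?thesis
      using abs_alg[of "cinner (A x) y' + cinner (A y') x" w2 w1 "\<kappa>" "complex_of_real (2 * Re (cinner x y'))"
          "complex_of_real ((1 - t)^2 + t^2)" "complex_of_real ((1-t)^2)" "complex_of_real (t^2)" "complex_of_real ((1-t)*t)"]
      unfolding q_def by (simp add: of_real_add)
  qed
  have znz: "z t \<noteq> 0" if t: "0 \<le> t" "t \<le> 1" for t
  proof
    assume z0: "z t = 0"
    show False
    proof (cases "t = 0")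
      case True then show False using z0 x unfolding z_def by simp
    next
      case False
      then have tp: "t > 0" using t by simp
      define c where "c = - (1 - t) / t"
      have "t *\<^sub>R y' = - ((1 - t) *\<^sub>R x)" using z0 unfolding z_def by (simp add: eq_neg_iff_add_eq_0 add.commute)
      then have "(1 / t) *\<^sub>R (t *\<^sub>R y') = (1 / t) *\<^sub>R (- ((1 - t) *\<^sub>R x))" by simp
      then have "y' = - (((1 - t) / t) *\<^sub>R x)" using tp by simp
      also have "\<dots> = c *\<^sub>R x" unfolding c_def by (metis minus_divide_left scaleR_minus_left)
      finally have "y' = c *\<^sub>R x" .
      then have "cinner (A y') y' = complex_of_real c * (complex_of_real c * w1)"
        unfolding w1_def by (simp add: A_scaleR cinner_scaleR_left cinner_scaleR_right)
      also have "complex_of_real c * (complex_of_real c * w1) = complex_of_real (c^2) * w1"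
        by (simp add: power2_eq_square)
      finally have eqc: "cinner (A y') y' = complex_of_real (c^2) * w1" .
      moreover have "c^2 = 1"
      proof -
        have "1 = norm y'" using y'1 by simp
        also have "\<dots> = \<bar>c\<bar>" using \<open>y' = c *\<^sub>R x\<close> x by simp
        finally have "\<bar>c\<bar> = 1" by simp
        then show ?thesis by (metis power2_abs power_one)
      qed
      ultimately have "w2 = w1" using Ay'y' eqc by simp
      then show False using q0 unfolding q_def by simp
    qed
  qed
  define \<phi> where "\<phi> t = ((1-t) * t * Re \<kappa> + t^2) / ((1-t)^2 + t^2 + 2 * (1-t) * t * \<rho>)" for t
  have den: "(1-t)^2 + t^2 + 2 * (1-t) * t * \<rho> \<noteq> 0" if "t \<in> {0..1}" for t
  proof -
    have "z t \<noteq> 0" using znz that by auto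
    then have h: "(norm (z t))^2 \<noteq> 0" by simp
    show ?thesis using h nz2[of t] by metis
  qed
  have cont: "continuous_on {0..1} \<phi>"
    unfolding \<phi>_def by (intro continuous_intros) (use den in auto)
  have "\<phi> 0 = 0" unfolding \<phi>_def by simp
  moreover have "\<phi> 1 = 1" unfolding \<phi>_def by simp
  ultimately obtain t where t: "0 \<le> t" "t \<le> 1" "\<phi> t = v"
    using IVT'[of \<phi> 0 v 1] cont v by auto
  have zt: "z t \<noteq> 0" using znz t by simp
  have "(norm (z t))^2 > 0" using zt by simp
  then have num: "(1-t) * t * Re \<kappa> + t^2 = v * (norm (z t))^2" using t(3) unfolding \<phi>_def nz2 by (simp add: field_simps)
  define u where "u = (1 / norm (z t)) *\<^sub>R z t"
  have "norm u = 1" "cinner (A u) u = cinner (A (z t)) (z t) / complex_of_real ((norm (z t))^2)"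
    using normalize_facts[OF zt] unfolding u_def by auto
  moreover have "cinner (A (z t)) (z t) = (w1 + q * complex_of_real v) * complex_of_real ((norm (z t))^2)"
    using Hz[of t] unfolding num by (simp add: algebra_simps)
  ultimately have "norm u = 1" "cinner (A u) u = w1 + complex_of_real v * q" using zt by (auto simp: mult.commute)
  then show ?thesis unfolding q_def w1_def w2_def by blast
qed

lemma convex_num_range: "convex (num_range A)"
  unfolding convex_def
proof (intro ballI allI impI)
  fix p1 p2 and u v :: real
  assume p1: "p1 \<in> num_range A" and p2: "p2 \<in> num_range A" and uv: "0 \<le> u" "0 \<le> v" "u + v = 1"
  obtain x where x: "norm x = 1" "p1 = cinner (A x) x" using p1 unfolding num_range_def by blast
  obtain y where y: "norm y = 1" "p2 = cinner (A y) y" using p2 unfolding num_range_def by blast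
  have eq: "u *\<^sub>R p1 + v *\<^sub>R p2 = p1 + complex_of_real v * (p2 - p1)"
  proof -
    have "u = 1 - v" using uv by simp
    then have "u *\<^sub>R p1 + v *\<^sub>R p2 = (1 - v) *\<^sub>R p1 + v *\<^sub>R p2" by simp
    then show ?thesis by (simp add: scaleR_conv_of_real algebra_simps)
  qed
  show "u *\<^sub>R p1 + v *\<^sub>R p2 \<in> num_range A"
  proof (cases "p1 = p2")
    case True
    then have "u *\<^sub>R p1 + v *\<^sub>R p2 = (u + v) *\<^sub>R p1" by (simp add: scaleR_add_left)
    then show ?thesis using p1 uv by simp
  next
    case False
    have "v \<le> 1" using uv by simp
    then obtain z where z: "norm z = 1" "cinner (A z) z = p1 + complex_of_real v * (p2 - p1)"
      using TH_core[OF x(1) y(1) _ uv(2)] False x(2) y(2) by blast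
    then show ?thesis unfolding eq num_range_def by (intro CollectI exI[of _ z]) auto
  qed
qed

end

lemma alg_id:
  fixes m \<mu> r R2 \<sigma> :: real and s \<tau> :: complex
  assumes r: "r > 0" "R2 = m^2 + r^2" and sg: "\<sigma>^2 = 1" and s: "s = Complex 0 (\<sigma> / r)"
    and tau: "\<tau> = Complex m \<mu>"
  shows "(cmod (1 - s * m))^2 * \<tau> + (1 - s * m) * cnj s * R2 + s * cnj (1 - s * m) * (2 * m * \<tau> - R2) + (cmod s)^2 * R2 * \<tau>
     = Complex m (- \<sigma> * r) * ((cmod (1 - s * m))^2 + (cmod s)^2 * R2 + 2 * Re ((1 - s * m) * cnj s * cnj \<tau>))"
proof -
  have ss: "\<And>X::real. \<sigma> * (\<sigma> * X) = X" using sg by (simp add: mult.assoc[symmetric] power2_eq_square)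
  show ?thesis
  unfolding s tau r(2)
  apply (simp only: cmod_power2)
  apply (simp add: complex_eq_iff power2_eq_square field_simps)
  using sg r(1) apply (simp add: power2_eq_square algebra_simps ss)
  done
qed

lemma alg_L2:
  fixes m \<mu> r R2 \<sigma> :: real and s \<tau> :: complex
  assumes r: "r > 0" "R2 = m^2 + r^2" and sg: "\<sigma>^2 = 1" and s: "s = Complex 0 (\<sigma> / r)"
    and tau: "\<tau> = Complex m \<mu>"
  shows "(cmod (1 - s * m))^2 + (cmod s)^2 * R2 + 2 * Re ((1 - s * m) * cnj s * cnj \<tau>) = 2 - 2 * \<sigma> * \<mu> / r"
proof -
  have ss: "\<And>X::real. \<sigma> * (\<sigma> * X) = X" using sg by (simp add: mult.assoc[symmetric] power2_eq_square)
  show ?thesis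
  unfolding s tau r(2)
  apply (simp only: cmod_power2)
  apply (simp add: power2_eq_square field_simps)
  using sg r(1) apply (simp add: power2_eq_square algebra_simps ss field_simps)
  done
qed

lemma cinner_comb4:
  "cinner (c *\<^sub>C a + d *\<^sub>C b) (c *\<^sub>C e + d *\<^sub>C (f::'a::complex_inner))
   = (c * cnj c) * cinner a e + (c * cnj d) * cinner a f + (d * cnj c) * cinner b e + (d * cnj d) * cinner b f"
  by (simp only: cinner_add_left cinner_add_right cinner_scaleC_left cinner_scaleC_right)
    (simp add: ring_distribs mult_ac add_ac)

lemma sq_null:
  assumes "\<And>n. (cmod (F n))^2 \<le> a n * K" "a \<longlonglongrightarrow> 0"
  shows "F \<longlonglongrightarrow> 0"
proof (rule Lim_null_comparison[of _ "\<lambda>n. sqrt (a n * K)"])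
  show "\<forall>\<^sub>F n in sequentially. norm (F n) \<le> sqrt (a n * K)"
    using assms(1) by (intro always_eventually allI) (simp add: real_le_rsqrt)
  have "(\<lambda>n. sqrt (a n * K)) \<longlonglongrightarrow> sqrt (0 * K)" by (intro tendsto_intros assms(2))
  then show "(\<lambda>n. sqrt (a n * K)) \<longlonglongrightarrow> 0" by simp
qed

context cbl begin

lemma core:
  assumes sup: "\<And>y. norm y = 1 \<Longrightarrow> Re (cinner (A y) y) \<le> m"
    and x1: "\<And>n. norm (x n) = 1" and xR: "(\<lambda>n. norm (A (x n))) \<longlonglongrightarrow> R"
    and xt: "(\<lambda>n. cinner (A (x n)) (x n)) \<longlonglongrightarrow> \<tau>"
    and mt: "Re \<tau> = m" and lt: "cmod \<tau> < R" and sg: "\<sigma>^2 = 1"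
  shows "Complex m (- \<sigma> * sqrt (R^2 - m^2)) \<in> closure (num_range A)"
proof -
  define \<mu> where "\<mu> = Im \<tau>"
  define r where "r = sqrt (R^2 - m^2)"
  have tau: "\<tau> = Complex m \<mu>" unfolding \<mu>_def using mt by (simp add: complex_eq_iff)
  have t2: "(cmod \<tau>)^2 = m^2 + \<mu>^2" unfolding tau by (simp add: cmod_power2)
  have "(cmod \<tau>)^2 < R^2" using lt by (simp add: power_strict_mono)
  then have mu2: "\<mu>^2 < R^2 - m^2" using t2 by simp
  have pos: "R^2 - m^2 > 0" using mu2 zero_le_power2[of \<mu>] by linarith
  then have rpos: "r > 0" unfolding r_def by simp
  have r2: "r^2 = R^2 - m^2" unfolding r_def using pos by simp
  have mur: "\<bar>\<mu>\<bar> < r" using power2_less_imp_less[of "\<bar>\<mu>\<bar>" r] mu2 r2 rpos by simp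
  have Rpos: "R > 0" using lt norm_ge_zero[of \<tau>] by linarith
  have supall: "Re (cinner (A y) y) \<le> m * (norm y)^2" for y
  proof (cases "y = 0")
    case True then show ?thesis by simp
  next
    case False
    have "Re (cinner (A ((1 / norm y) *\<^sub>R y)) ((1 / norm y) *\<^sub>R y)) \<le> m" using sup False by simp
    then have "Re (cinner (A y) y) / (norm y)^2 \<le> m"
      using False by (simp add: A_scaleR cinner_scaleR_left cinner_scaleR_right power2_eq_square)
    then show ?thesis using False by (simp add: divide_le_eq)
  qed
  define Qf where "Qf a b = complex_of_real (R^2) * cinner a b - cinner (A a) (A b)" for a b
  define Pf where "Pf a b = complex_of_real m * cinner a b - (cinner (A a) b + cinner a (A b)) / 2" for a b
  have Qcs: "(cmod (Qf a b))^2 \<le> Re (Qf a a) * Re (Qf b b)" for a b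
  proof (rule form_CS)
    show "Qf (a + b) c = Qf a c + Qf b c" for a b c unfolding Qf_def by (simp add: A_add cinner_add_left algebra_simps)
    show "Qf (k *\<^sub>C a) b = k * Qf a b" for k a b unfolding Qf_def by (simp add: A_scaleC cinner_scaleC_left algebra_simps)
    show "Qf a b = cnj (Qf b a)" for a b
    proof -
      have "cnj (cinner b a) = cinner a b" "cnj (cinner (A b) (A a)) = cinner (A a) (A b)"
        by (metis cinner_commute complex_cnj_cnj)+
      then show ?thesis unfolding Qf_def by simp
    qed
    show "0 \<le> Re (Qf a a)" for a
    proof -
      have "(norm (A a))^2 \<le> (R * norm a)^2" using norm_A[of a] by (simp add: power_mono)
      then show ?thesis unfolding Qf_def by (simp add: Re_cinner_self power_mult_distrib)
    qed
  qed
  have Pcs: "(cmod (Pf a b))^2 \<le> Re (Pf a a) * Re (Pf b b)" for a b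
  proof (rule form_CS)
    show "Pf (a + b) c = Pf a c + Pf b c" for a b c unfolding Pf_def
      by (simp add: A_add cinner_add_left cinner_add_right add_divide_distrib algebra_simps)
    show "Pf (k *\<^sub>C a) b = k * Pf a b" for k a b unfolding Pf_def
      by (simp add: A_scaleC cinner_scaleC_left cinner_scaleC_right algebra_simps)
    show "Pf a b = cnj (Pf b a)" for a b
    proof -
      have "cnj (cinner b a) = cinner a b" "cnj (cinner (A b) a) = cinner a (A b)" "cnj (cinner b (A a)) = cinner (A a) b"
        by (metis cinner_commute complex_cnj_cnj)+
      then show ?thesis unfolding Pf_def by (simp add: algebra_simps)
    qed
    show "0 \<le> Re (Pf a a)" for a
    proof -
      have "Re (cinner a (A a)) = Re (cinner (A a) a)" by (subst cinner_commute) simp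
      then show ?thesis unfolding Pf_def using supall[of a] by (simp add: Re_cinner_self)
    qed
  qed
  define Ax where "Ax n = A (x n)" for n
  define AAx where "AAx n = A (A (x n))" for n
  define tn where "tn n = cinner (Ax n) (x n)" for n
  define N where "N n = (norm (Ax n))^2" for n
  define P where "P n = cinner (AAx n) (Ax n)" for n
  define Q where "Q n = cinner (AAx n) (x n)" for n
  have nAx: "norm (Ax n) \<le> R" for n unfolding Ax_def using norm_A_unit[OF x1] by simp
  have tn: "tn \<longlonglongrightarrow> \<tau>" unfolding tn_def Ax_def using xt by simp
  have N: "N \<longlonglongrightarrow> R^2" unfolding N_def Ax_def by (intro tendsto_intros xR)
  have Q0: "(\<lambda>n. Qf (x n) (Ax n)) \<longlonglongrightarrow> 0"
  proof (rule sq_null[of _ "\<lambda>n. R^2 - N n" "R^2 * R^2"])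
    show "(cmod (Qf (x n) (Ax n)))^2 \<le> (R^2 - N n) * (R^2 * R^2)" for n
    proof -
      have a: "Re (Qf (x n) (x n)) = R^2 - N n" unfolding Qf_def N_def Ax_def using x1[of n] by (simp add: Re_cinner_self)
      have b: "Re (Qf (Ax n) (Ax n)) \<le> R^2 * R^2"
      proof -
        have "Re (Qf (Ax n) (Ax n)) = R^2 * (norm (Ax n))^2 - (norm (A (Ax n)))^2" unfolding Qf_def by (simp add: Re_cinner_self)
        also have "\<dots> \<le> R^2 * (norm (Ax n))^2" by simp
        also have "\<dots> \<le> R^2 * R^2" using nAx[of n] by (intro mult_left_mono power_mono) auto
        finally show ?thesis .
      qed
      have "N n \<le> R^2" unfolding N_def using nAx[of n] by (simp add: power_mono)
      then have a0: "0 \<le> Re (Qf (x n) (x n))" using a by simp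
      have "(cmod (Qf (x n) (Ax n)))^2 \<le> Re (Qf (x n) (x n)) * Re (Qf (Ax n) (Ax n))" by (rule Qcs)
      also have "\<dots> \<le> (R^2 - N n) * (R^2 * R^2)" unfolding a[symmetric] using b a0 by (rule mult_left_mono)
      finally show ?thesis .
    qed
    have "(\<lambda>n. R^2 - N n) \<longlonglongrightarrow> R^2 - R^2" by (intro tendsto_intros N)
    then show "(\<lambda>n. R^2 - N n) \<longlonglongrightarrow> 0" by simp
  qed
  have P0: "(\<lambda>n. Pf (x n) (Ax n)) \<longlonglongrightarrow> 0"
  proof (rule sq_null[of _ "\<lambda>n. m - Re (tn n)" "(\<bar>m\<bar> + R) * R^2"])
    show "(cmod (Pf (x n) (Ax n)))^2 \<le> (m - Re (tn n)) * ((\<bar>m\<bar> + R) * R^2)" for n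
    proof -
      have a: "Re (Pf (x n) (x n)) = m - Re (tn n)"
      proof -
        have "Re (cinner (x n) (Ax n)) = Re (tn n)" unfolding tn_def by (subst cinner_commute) simp
        then show ?thesis unfolding Pf_def tn_def Ax_def using x1[of n] by (simp add: Re_cinner_self)
      qed
      have a0: "0 \<le> m - Re (tn n)" using sup[OF x1[of n]] unfolding tn_def Ax_def by simp
      have b: "Re (Pf (Ax n) (Ax n)) \<le> (\<bar>m\<bar> + R) * R^2"
      proof -
        have e: "Re (cinner (Ax n) (A (Ax n))) = Re (cinner (A (Ax n)) (Ax n))" by (subst cinner_commute) simp
        have "Re (Pf (Ax n) (Ax n)) = m * (norm (Ax n))^2 - Re (cinner (A (Ax n)) (Ax n))"
          unfolding Pf_def using e by (simp add: Re_cinner_self)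
        also have "\<dots> \<le> \<bar>m\<bar> * (norm (Ax n))^2 + R * (norm (Ax n))^2"
        proof -
          have "m * (norm (Ax n))^2 \<le> \<bar>m\<bar> * (norm (Ax n))^2" by (intro mult_right_mono) auto
          moreover have "- Re (cinner (A (Ax n)) (Ax n)) \<le> R * (norm (Ax n))^2"
            using cinner_A_le[of "Ax n"] abs_Re_le_cmod[of "cinner (A (Ax n)) (Ax n)"] by linarith
          ultimately show ?thesis by linarith
        qed
        also have "\<dots> = (\<bar>m\<bar> + R) * (norm (Ax n))^2" by (simp add: algebra_simps)
        also have "\<dots> \<le> (\<bar>m\<bar> + R) * R^2" using nAx[of n] R_nonneg by (intro mult_left_mono power_mono) auto
        finally show ?thesis .
      qed
      have "(cmod (Pf (x n) (Ax n)))^2 \<le> Re (Pf (x n) (x n)) * Re (Pf (Ax n) (Ax n))" by (rule Pcs)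
      also have "\<dots> \<le> (m - Re (tn n)) * ((\<bar>m\<bar> + R) * R^2)" unfolding a using b a0 by (rule mult_left_mono)
      finally show ?thesis .
    qed
    have "(\<lambda>n. m - Re (tn n)) \<longlonglongrightarrow> m - Re \<tau>" by (intro tendsto_intros tn)
    then show "(\<lambda>n. m - Re (tn n)) \<longlonglongrightarrow> 0" using mt by simp
  qed
  have Peq: "P n = complex_of_real (R^2) * tn n - cnj (Qf (x n) (Ax n))" for n
  proof -
    have "cnj (cinner (x n) (Ax n)) = tn n" "cnj (cinner (Ax n) (AAx n)) = P n"
      unfolding tn_def P_def by (metis cinner_commute complex_cnj_cnj)+
    then show ?thesis unfolding Qf_def AAx_def Ax_def by simp
  qed
  have Qeq: "Q n = 2 * complex_of_real m * tn n - complex_of_real (N n) - 2 * cnj (Pf (x n) (Ax n))" for n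
  proof -
    have "cnj (cinner (x n) (Ax n)) = tn n" "cnj (cinner (x n) (AAx n)) = Q n"
      unfolding tn_def Q_def by (metis cinner_commute complex_cnj_cnj)+
    moreover have "cinner (Ax n) (Ax n) = complex_of_real (N n)" unfolding N_def by (rule cinner_self)
    moreover have "A (Ax n) = AAx n" unfolding Ax_def AAx_def by simp
    ultimately show ?thesis unfolding Pf_def Ax_def[symmetric] by (simp add: algebra_simps)
  qed
  have Plim: "P \<longlonglongrightarrow> complex_of_real (R^2) * \<tau>"
  proof -
    have "(\<lambda>n. complex_of_real (R^2) * tn n - cnj (Qf (x n) (Ax n))) \<longlonglongrightarrow> complex_of_real (R^2) * \<tau> - cnj 0"
      by (intro tendsto_intros tn Q0)
    moreover have "P = (\<lambda>n. complex_of_real (R^2) * tn n - cnj (Qf (x n) (Ax n)))" using Peq by (intro ext)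
    ultimately show ?thesis by simp
  qed
  have Qlim: "Q \<longlonglongrightarrow> 2 * complex_of_real m * \<tau> - complex_of_real (R^2)"
  proof -
    have "(\<lambda>n. 2 * complex_of_real m * tn n - complex_of_real (N n) - 2 * cnj (Pf (x n) (Ax n)))
        \<longlonglongrightarrow> 2 * complex_of_real m * \<tau> - complex_of_real (R^2) - 2 * cnj 0"
      by (intro tendsto_intros tn N P0)
    moreover have "Q = (\<lambda>n. 2 * complex_of_real m * tn n - complex_of_real (N n) - 2 * cnj (Pf (x n) (Ax n)))"
      using Qeq by (intro ext)
    ultimately show ?thesis by simp
  qed
  define s where "s = Complex 0 (\<sigma> / r)"
  define c where "c = 1 - s * complex_of_real m"
  define u where "u n = c *\<^sub>C x n + s *\<^sub>C Ax n" for n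
  have Au: "cinner (A (u n)) (u n) = (c * cnj c) * tn n + (c * cnj s) * complex_of_real (N n) + (s * cnj c) * Q n + (s * cnj s) * P n" for n
  proof -
    have "A (u n) = c *\<^sub>C Ax n + s *\<^sub>C AAx n" unfolding u_def Ax_def AAx_def by (simp add: A_add A_scaleC)
    then show ?thesis unfolding u_def using cinner_comb4[of c "Ax n" s "AAx n" "x n" "Ax n"]
      by (simp add: tn_def N_def P_def Q_def cinner_self)
  qed
  have nu: "(norm (u n))^2 = (cmod c)^2 + (cmod s)^2 * N n + 2 * Re (c * cnj s * cnj (tn n))" for n
  proof -
    have "cinner (x n) (Ax n) = cnj (tn n)" unfolding tn_def by (rule cinner_commute)
    then show ?thesis unfolding u_def N_def using norm_comb_sq[of c "x n" s "Ax n"] x1[of n] by simp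
  qed
  define L1 where "L1 = (c * cnj c) * \<tau> + (c * cnj s) * complex_of_real (R^2) + (s * cnj c) * (2 * complex_of_real m * \<tau> - complex_of_real (R^2))
     + (s * cnj s) * (complex_of_real (R^2) * \<tau>)"
  define L2 where "L2 = (cmod c)^2 + (cmod s)^2 * R^2 + 2 * Re (c * cnj s * cnj \<tau>)"
  have l1: "(\<lambda>n. cinner (A (u n)) (u n)) \<longlonglongrightarrow> L1" unfolding Au L1_def
    by (intro tendsto_intros tn N Plim Qlim)
  have l2: "(\<lambda>n. (norm (u n))^2) \<longlonglongrightarrow> L2" unfolding nu L2_def
    by (intro tendsto_intros tn N)
  have R2: "R^2 = m^2 + r^2" using r2 by simp
  have L2v: "L2 = 2 - 2 * \<sigma> * \<mu> / r" unfolding L2_def c_def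
    using alg_L2[OF rpos R2 sg s_def tau] by simp
  have "\<sigma> * \<mu> \<le> \<bar>\<mu>\<bar>"
  proof -
    have "\<sigma> = 1 \<or> \<sigma> = -1" using sg by (simp add: power2_eq_1_iff)
    then show ?thesis by auto
  qed
  then have "\<sigma> * \<mu> / r < 1" using mur rpos by (simp add: divide_less_eq)
  then have L2pos: "L2 > 0" unfolding L2v by simp
  have L1v: "L1 = Complex m (- \<sigma> * r) * complex_of_real L2"
  proof -
    have cc: "c * cnj c = complex_of_real ((cmod c)^2)" by (rule complex_norm_square[symmetric])
    have ss: "s * cnj s = complex_of_real ((cmod s)^2)" by (rule complex_norm_square[symmetric])
    note AI = alg_id[OF rpos R2 sg s_def tau, unfolded c_def[symmetric]]
    show ?thesis using AI unfolding L1_def L2_def cc ss by (simp add: algebra_simps)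
  qed
  have "(\<lambda>n. cinner (A (u n)) (u n) / complex_of_real ((norm (u n))^2)) \<longlonglongrightarrow> L1 / complex_of_real L2"
    using L2pos by (intro tendsto_intros l1 l2) simp
  moreover have "L1 / complex_of_real L2 = Complex m (- \<sigma> * r)" using L1v L2pos by simp
  moreover have "eventually (\<lambda>n. u n \<noteq> 0) sequentially"
  proof -
    have "eventually (\<lambda>n. (norm (u n))^2 > 0) sequentially" using order_tendstoD(1)[OF l2 L2pos] .
    then show ?thesis by eventually_elim auto
  qed
  ultimately show ?thesis unfolding r_def using seq_closure by metis
qed

end

context cbl begin

lemma unit_seq_closure:
  assumes "\<And>n. norm (x n) = 1" "(\<lambda>n. cinner (A (x n)) (x n)) \<longlonglongrightarrow> w"
  shows "w \<in> closure (num_range A)"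
proof -
  have "\<And>n. cinner (A (x n)) (x n) \<in> num_range A" using assms(1) unfolding num_range_def by blast
  then show ?thesis using assms(2) unfolding closure_sequential
    by (intro exI[of _ "\<lambda>n. cinner (A (x n)) (x n)"]) blast
qed

lemma frontier_closure: "frontier (num_range A) \<subseteq> closure (num_range A)"
  unfolding frontier_def by blast

lemma rotate:
  assumes d1: "cmod d = 1"
  defines "T \<equiv> (\<lambda>x. cnj d *\<^sub>C A x)"
  shows "cbounded_linear T" "\<And>x. norm (T x) = norm (A x)" "onorm T = R"
    "\<And>x. cinner (T x) x = cnj d * cinner (A x) x"
    "\<And>w. w \<in> closure (num_range T) \<Longrightarrow> d * w \<in> closure (num_range A)"
proof -
  show nT: "norm (T x) = norm (A x)" for x unfolding T_def using d1 by (simp add: norm_scaleC)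
  show cT: "cbounded_linear T"
    unfolding cbounded_linear_def T_def
  proof (intro conjI allI)
    show "cnj d *\<^sub>C A (x + y) = cnj d *\<^sub>C A x + cnj d *\<^sub>C A y" for x y by (simp add: A_add scaleC_add_right)
    show "cnj d *\<^sub>C A (c *\<^sub>C x) = c *\<^sub>C (cnj d *\<^sub>C A x)" for c x by (simp add: A_scaleC scaleC_scaleC mult.commute)
    show "\<exists>K. \<forall>x. norm (cnj d *\<^sub>C A x) \<le> K * norm x" using d1 norm_A by (intro exI[of _ R]) (simp add: norm_scaleC)
  qed
  show "onorm T = R" unfolding onorm_def using nT by simp
  show cTx: "cinner (T x) x = cnj d * cinner (A x) x" for x unfolding T_def by (simp add: cinner_scaleC_left)
  show "d * w \<in> closure (num_range A)" if w: "w \<in> closure (num_range T)" for w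
  proof -
    interpret t: cbl T by unfold_locales (rule cT)
    obtain x where x: "\<And>n. norm (x n) = 1" "(\<lambda>n. cinner (T (x n)) (x n)) \<longlonglongrightarrow> w"
      using t.closure_num_range_seq[OF w] by blast
    have dd: "d * cnj d = 1" using d1 complex_norm_square[of d] by simp
    have "(\<lambda>n. d * cinner (T (x n)) (x n)) \<longlonglongrightarrow> d * w" by (intro tendsto_intros x(2))
    moreover have "d * cinner (T (x n)) (x n) = cinner (A (x n)) (x n)" for n
      unfolding cTx by (simp add: mult.assoc[symmetric] dd)
    ultimately show ?thesis using unit_seq_closure[OF x(1)] by simp
  qed
qed

end

theorem corollary3:
  fixes A :: "'a::chilbert_space \<Rightarrow> 'a"
  assumes "\<exists>x::'a. x \<noteq> 0"
    and "cbounded_linear A"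
  shows "max_num_range A \<inter> frontier (num_range A) = (op_spectrum A \<inter> circ_A A) \<union> chords_A A"
proof -
  interpret cbl A by unfold_locales (rule assms(2))
  have sub1: "op_spectrum A \<inter> circ_A A \<subseteq> max_num_range A \<inter> frontier (num_range A)"
  proof
    fix p assume "p \<in> op_spectrum A \<inter> circ_A A"
    then have ps: "p \<in> op_spectrum A" and pR: "cmod p = R" unfolding circ_A_def by auto
    obtain x where x: "\<And>n. norm (x n) = 1" "(\<lambda>n. A (x n) - p *\<^sub>C x n) \<longlonglongrightarrow> 0"
      using spec_circle_approx[OF assms(2) ps pR] by blast
    have "(\<lambda>n. cinner (A (x n) - p *\<^sub>C x n) (x n)) \<longlonglongrightarrow> 0"
      by (rule cinner_null_left[OF x(2), of _ 1]) (simp add: x(1))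
    moreover have "cinner (A (x n) - p *\<^sub>C x n) (x n) = cinner (A (x n)) (x n) - p" for n
      using x(1)[of n] by (simp add: cinner_diff_left cinner_scaleC_left cinner_self)
    ultimately have "(\<lambda>n. cinner (A (x n)) (x n) - p) \<longlonglongrightarrow> 0" by simp
    then have lim: "(\<lambda>n. cinner (A (x n)) (x n)) \<longlonglongrightarrow> p" by (simp add: LIM_zero_iff)
    have "(\<lambda>n. norm (A (x n))) \<longlonglongrightarrow> R" by (rule circle_approx_eig(2)[OF x(1) lim pR])
    then have W0: "p \<in> max_num_range A" unfolding max_num_range_def using x(1) lim by blast
    then have "p \<in> frontier (num_range A)" using frontier_circle W0_closure pR by blast
    then show "p \<in> max_num_range A \<inter> frontier (num_range A)" using W0 by blast
  qed
  have sub2: "chords_A A \<subseteq> max_num_range A \<inter> frontier (num_range A)"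
  proof
    fix p assume "p \<in> chords_A A"
    then obtain a b where ab: "a \<noteq> b" "a \<in> circ_A A" "b \<in> circ_A A"
      "closed_segment a b \<subseteq> frontier (num_range A)" "p \<in> closed_segment a b"
      unfolding chords_A_def by blast
    have a: "a \<in> closure (num_range A)" using ab(4) frontier_closure ends_in_segment(1)[of a b] by blast
    have b: "b \<in> closure (num_range A)" using ab(4) frontier_closure ends_in_segment(2)[of a b] by blast
    have "p \<in> max_num_range A"
      using chord_W0[OF a _ b _ ab(1) ab(5)] ab(2,3) unfolding circ_A_def by simp
    then show "p \<in> max_num_range A \<inter> frontier (num_range A)" using ab(4,5) by blast
  qed
  have sub3: "max_num_range A \<inter> frontier (num_range A) \<subseteq> (op_spectrum A \<inter> circ_A A) \<union> chords_A A"
  proof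
    fix p assume p: "p \<in> max_num_range A \<inter> frontier (num_range A)"
    then have pW0: "p \<in> max_num_range A" and pf: "p \<in> frontier (num_range A)" by auto
    obtain x where x: "\<And>n. norm (x n) = 1" "(\<lambda>n. norm (A (x n))) \<longlonglongrightarrow> R"
      "(\<lambda>n. cinner (A (x n)) (x n)) \<longlonglongrightarrow> p" using W0_seq[OF pW0] by blast
    have pleR: "cmod p \<le> R" by (rule W0_bound[OF pW0])
    show "p \<in> (op_spectrum A \<inter> circ_A A) \<union> chords_A A"
    proof (cases "cmod p = R")
      case True
      have "p \<in> op_spectrum A" by (rule approx_eig_spectrum[OF x(1) circle_approx_eig(1)[OF x(1) x(3) True]])
      then show ?thesis using True unfolding circ_A_def by simp
    next
      case False
      then have plt: "cmod p < R" using pleR by simp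
      have pc: "p \<in> closure (num_range A)" and pni: "p \<notin> interior (num_range A)"
        using pf unfolding frontier_def by auto
      obtain d where d1: "cmod d = 1" and dsup: "\<And>z. z \<in> num_range A \<Longrightarrow> Re (cnj d * z) \<le> Re (cnj d * p)"
        using support_line[OF convex_num_range pc pni] by blast
      define T where "T = (\<lambda>x. cnj d *\<^sub>C A x)"
      note rot = rotate[OF d1, folded T_def]
      interpret t: cbl T by unfold_locales (rule rot(1))
      have Tn: "norm (T y) = norm (A y)" for y unfolding T_def using d1 by (simp add: norm_scaleC)
      have Tc: "cinner (T y) y = cnj d * cinner (A y) y" for y unfolding T_def by (simp add: cinner_scaleC_left)
      define m where "m = Re (cnj d * p)"
      define \<tau> where "\<tau> = cnj d * p"
      have dd: "d * cnj d = 1" using d1 complex_norm_square[of d] by simp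
      have tR: "t.R = R" by (rule rot(3))
      have supT: "Re (cinner (T y) y) \<le> m" if "norm y = 1" for y
      proof -
        have "cinner (A y) y \<in> num_range A" using that unfolding num_range_def by blast
        then show ?thesis unfolding Tc m_def by (rule dsup)
      qed
      have xT1: "(\<lambda>n. norm (T (x n))) \<longlonglongrightarrow> t.R" unfolding Tn tR by (rule x(2))
      have xT2: "(\<lambda>n. cinner (T (x n)) (x n)) \<longlonglongrightarrow> \<tau>" unfolding Tc \<tau>_def by (intro tendsto_intros x(3))
      have mt: "Re \<tau> = m" unfolding \<tau>_def m_def by simp
      have ct: "cmod \<tau> = cmod p" unfolding \<tau>_def using d1 by (simp add: norm_mult)
      have tlt: "cmod \<tau> < t.R" using ct plt tR by simp
      define r where "r = sqrt (R^2 - m^2)"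
      have c1: "Complex m (- 1 * r) \<in> closure (num_range T)"
        using t.core[OF supT x(1) xT1 xT2 mt tlt, of 1] unfolding tR r_def by simp
      have c2: "Complex m (- (-1) * r) \<in> closure (num_range T)"
        using t.core[OF supT x(1) xT1 xT2 mt tlt, of "-1"] unfolding tR r_def by simp
      define a where "a = d * Complex m (- r)"
      define b where "b = d * Complex m r"
      have aW: "a \<in> closure (num_range A)" using rot(5)[OF c1] unfolding a_def by simp
      have bW: "b \<in> closure (num_range A)" using rot(5)[OF c2] unfolding b_def by simp
      define \<mu> where "\<mu> = Im \<tau>"
      have tau: "\<tau> = Complex m \<mu>" unfolding \<mu>_def using mt by (simp add: complex_eq_iff)
      have t2: "(cmod \<tau>)^2 = m^2 + \<mu>^2" unfolding tau by (simp add: cmod_power2)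
      have "(cmod \<tau>)^2 < R^2" using tlt tR by (simp add: power_strict_mono)
      then have mu2: "\<mu>^2 < R^2 - m^2" using t2 by simp
      have pos: "R^2 - m^2 > 0" using mu2 zero_le_power2[of \<mu>] by linarith
      then have rpos: "r > 0" unfolding r_def by simp
      have r2: "r^2 = R^2 - m^2" unfolding r_def using pos by simp
      have mur: "\<bar>\<mu>\<bar> < r" using power2_less_imp_less[of "\<bar>\<mu>\<bar>" r] mu2 r2 rpos by simp
      have Rnn: "R \<ge> 0" by (rule R_nonneg)
      have cm: "cmod (Complex m r) = R" "cmod (Complex m (- r)) = R"
        using r2 Rnn by (simp_all add: cmod_def real_sqrt_unique)
      have aR: "cmod a = R" unfolding a_def using cm d1 by (simp add: norm_mult)
      have bR: "cmod b = R" unfolding b_def using cm d1 by (simp add: norm_mult)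
      have abne: "a \<noteq> b"
      proof
        assume "a = b"
        then have "Complex m (- r) = Complex m r" unfolding a_def b_def using d1 by auto
        then show False using rpos by simp
      qed
      have cda: "cnj d * a = Complex m (- r)" unfolding a_def by (simp add: mult.assoc[symmetric] mult.commute[of "cnj d"] dd)
      have cdb: "cnj d * b = Complex m r" unfolding b_def by (simp add: mult.assoc[symmetric] mult.commute[of "cnj d"] dd)
      have seg_front: "closed_segment a b \<subseteq> frontier (num_range A)"
      proof
        fix z assume zs: "z \<in> closed_segment a b"
        have "z \<in> max_num_range A" by (rule chord_W0[OF aW aR bW bR abne zs])
        then have zc: "z \<in> closure (num_range A)" using W0_closure by blast
        obtain u where u: "z = (1 - u) *\<^sub>R a + u *\<^sub>R b" using zs unfolding closed_segment_def by blast
        have "cnj d * z = (1 - u) *\<^sub>R (cnj d * a) + u *\<^sub>R (cnj d * b)"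
          unfolding u by (simp add: scaleR_conv_of_real algebra_simps)
        then have e: "cnj d * z = (1 - u) *\<^sub>R Complex m (- r) + u *\<^sub>R Complex m r" unfolding cda cdb .
        have "Re (cnj d * z) = (1 - u) * m + u * m" unfolding e by simp
        then have zm: "Re (cnj d * z) = m" by (simp add: algebra_simps)
        have sub: "num_range A \<subseteq> {w. inner d w \<le> m}" using dsup unfolding m_def inner_complex_Re by auto
        have "interior (num_range A) \<subseteq> {w. inner d w < m}"
        proof -
          have d0: "d \<noteq> 0" using d1 by auto
          show ?thesis using interior_mono[OF sub] interior_halfspace_le[OF d0, of m] by simp
        qed
        then have "z \<notin> interior (num_range A)" using zm unfolding inner_complex_Re by auto
        then show "z \<in> frontier (num_range A)" using zc unfolding frontier_def by blast
      qed
      have pseg: "p \<in> closed_segment a b"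
      proof -
        define u where "u = (\<mu> + r) / (2 * r)"
        have u01: "0 \<le> u" "u \<le> 1" unfolding u_def using mur rpos by (auto simp: field_simps)
        have "(1 - u) *\<^sub>R a + u *\<^sub>R b = d * ((1 - u) *\<^sub>R Complex m (- r) + u *\<^sub>R Complex m r)"
          unfolding a_def b_def by (simp add: scaleR_conv_of_real algebra_simps)
        also have "(1 - u) *\<^sub>R Complex m (- r) + u *\<^sub>R Complex m r = Complex m \<mu>"
          unfolding u_def using rpos by (simp add: complex_eq_iff field_simps)
        also have "d * Complex m \<mu> = p" unfolding tau[symmetric] \<tau>_def by (simp add: mult.assoc[symmetric] dd)
        finally show ?thesis unfolding closed_segment_def using u01 by blast
      qed
      have "p \<in> chords_A A"
        unfolding chords_A_def using abne aR bR seg_front pseg unfolding circ_A_def by blast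
      then show ?thesis by simp
    qed
  qed
  show ?thesis using sub1 sub2 sub3 by blast
qed

end
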